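(* Let $\{\mathbb P_\theta\}$ satisfy the regularity assumption (R) at $\theta_1$, let $h\in\mathbb R^k$, and let $\mathcal G$ be a directed graph functional on $\mathbb R^d$ such that $(\mathcal G,\mathbb P_{\theta_1})$ satisfies the covariance condition (C) with limit functions $\lambda^\uparrow,\lambda^\downarrow$. Then under the bootstrap distribution, $$\mathrm{Cov}(\mathcal R(\mathcal G(\mathcal Z_N)),\dot L_N\mid\mathcal F)\to\sigma_{12}:=\frac r2\Big(p\int\langle h,\nabla f(z|\theta_1)\rangle\lambda^\downarrow(z)dz-q\int\langle h,\nabla f(z|\theta_1)\rangle\lambda^\uparrow(z)dz\Big)$$ in probability.
   Context: Family $\{\mathbb P_\theta\}_{\theta\in\Theta\subseteq\mathbb R^k}$ on $\mathbb R^d$ with densities $f(\cdot|\theta)$, score $\eta=\nabla_\theta f/f$. (R): quadratic mean differentiability at $\theta_1$ and $\mathbb E|\langle h,\eta(V,\theta_1)\rangle|^4<\infty$ for $V\sim\mathbb P_{\theta_1}$. Directed graph functional: assigns to each finite $S\subset\mathbb R^d$ a directed graph on $S$ (no loops, no repeated same-direction edges). $d^\uparrow(x,\mathcal G(S)),d^\downarrow(x,\mathcal G(S))$: out/in-degree of $x$ in $\mathcal G(S\cup\{x\})$; $\lambda^\uparrow(x,\mathcal G(S))=Nd^\uparrow(x,\mathcal G(S^x))/|E(\mathcal G(S^x))|$, similarly $\lambda^\downarrow$, with $S^x=S\cup\{x\}$. (C): for $\mathcal V_N$ i.i.d. $\mathbb P_{\theta_1}$, $\lambda^\uparrow(z)=\lim_N\mathbb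 E\lambda^\uparrow(z,\mathcal G(\mathcal V_N))$, $\lambda^\downarrow(z)=\lim_N\mathbb E\lambda^\downarrow(z,\mathcal G(\mathcal V_N))$ for a.e. $z$ (zero otherwise), and $\frac1N\sum_i\langle h,\eta(V_i,\theta_1)\rangle\lambda^{\uparrow}(V_i,\mathcal G(\mathcal V_N))\to\int\langle h,\nabla f(z|\theta_1)\rangle\lambda^\uparrow(z)dz$ in probability, likewise for $\downarrow$. Bootstrap distribution: $Z_1,Z_2,\dots$ i.i.d. $\mathbb P_{\theta_1}$, $\mathcal F=\sigma(Z_i)$, $\mathcal Z_N=\{Z_1..Z_N\}$; independent labels $c_i\in\{1,2\}$, $\mathbb P(c_i=1)=N_1/N$, independent of $\mathcal F$; $N=N_1+N_2$, $N_1/N\to p\in(0,1)$, $q=1-p$, $r=2pq$. $T=\sum_{i\ne j}\mathbf 1\{c_i=1,c_j=2\}\mathbf 1\{(Z_i,Z_j)\in E(\mathcal G(\mathcal Z_N))\}/|E(\mathcal G(\mathcal Z_N))|$, $\mathcal R(\mathcal G(\mathcal Z_N))=\sqrt N\{T-\frac{N_1N_2}{N(N-1)}\}$, $\dot L_N=N^{-1/2}\sum_{i=1}^N\langle h,\eta(Z_i,\theta_1)\rangle\mathbf 1\{c_i=2\}$. *)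

theory Defs
  imports "HOL-Probability.Probability"
begin

definition qmd ::
  "'k::euclidean_space set \<Rightarrow> ('k \<Rightarrow> 'd::euclidean_space \<Rightarrow> real) \<Rightarrow> 'k \<Rightarrow> ('d \<Rightarrow> 'k) \<Rightarrow> bool" where
  "qmd \<Theta> f \<theta>1 \<eta> \<longleftrightarrow>
     (\<forall>e>0. eventually (\<lambda>\<theta>.
        (\<integral>\<^sup>+ z. ennreal ((sqrt (f \<theta> z) - sqrt (f \<theta>1 z)
                    - (1/2) * ((\<theta> - \<theta>1) \<bullet> \<eta> z) * sqrt (f \<theta>1 z))\<^sup>2) \<partial>lborel)
        \<le> ennreal (e * (norm (\<theta> - \<theta>1))\<^sup>2)) (at \<theta>1 within \<Theta>))"

text \<open>The score eta = grad_theta f / f (set to 0 where f = 0).\<close>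
definition score :: "('k::euclidean_space \<Rightarrow> 'd::euclidean_space \<Rightarrow> real) \<Rightarrow> 'k \<Rightarrow> ('d \<Rightarrow> 'k) \<Rightarrow> 'd \<Rightarrow> 'k" where
  "score f \<theta>1 gradf z = (1 / f \<theta>1 z) *\<^sub>R gradf z"

text \<open>A directed graph functional assigns to every finite S a set of directed edges on S
  without loops (edge sets exclude repeated same-direction edges automatically).\<close>
definition dir_graph_functional :: "('d set \<Rightarrow> ('d \<times> 'd) set) \<Rightarrow> bool" where
  "dir_graph_functional G \<longleftrightarrow>
     (\<forall>S. finite S \<longrightarrow> G S \<subseteq> S \<times> S \<and> (\<forall>x. (x, x) \<notin> G S))"

text \<open>Implicit measurability of the graph functional: the event that (v_i, v_j) is an edge of
  the graph built on the sample v_0, ..., v_(N-1) is measurable.\<close>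
definition graph_measurable :: "('d::topological_space set \<Rightarrow> ('d \<times> 'd) set) \<Rightarrow> bool" where
  "graph_measurable G \<longleftrightarrow>
     (\<forall>N i j. i < N \<longrightarrow> j < N \<longrightarrow>
        {v \<in> space (PiM {..<N} (\<lambda>_::nat. borel)). (v i, v j) \<in> G (v ` {..<N})}
          \<in> sets (PiM {..<N} (\<lambda>_::nat. borel)))"

definition out_deg :: "('d set \<Rightarrow> ('d \<times> 'd) set) \<Rightarrow> 'd set \<Rightarrow> 'd \<Rightarrow> nat" where
  "out_deg G S x = card {y. (x, y) \<in> G (insert x S)}"

definition in_deg :: "('d set \<Rightarrow> ('d \<times> 'd) set) \<Rightarrow> 'd set \<Rightarrow> 'd \<Rightarrow> nat" where
  "in_deg G S x = card {y. (y, x) \<in> G (insert x S)}"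

definition lam_up :: "('d set \<Rightarrow> ('d \<times> 'd) set) \<Rightarrow> nat \<Rightarrow> 'd set \<Rightarrow> 'd \<Rightarrow> real" where
  "lam_up G N S x = real N * real (out_deg G S x) / real (card (G (insert x S)))"

definition lam_dn :: "('d set \<Rightarrow> ('d \<times> 'd) set) \<Rightarrow> nat \<Rightarrow> 'd set \<Rightarrow> 'd \<Rightarrow> real" where
  "lam_dn G N S x = real N * real (in_deg G S x) / real (card (G (insert x S)))"

definition sample_law :: "'d measure \<Rightarrow> nat \<Rightarrow> (nat \<Rightarrow> 'd) measure" where
  "sample_law P N = PiM {..<N} (\<lambda>_. P)"

definition lim0 :: "(nat \<Rightarrow> real) \<Rightarrow> real" where
  "lim0 X = (if convergent X then lim X else 0)"

definition E_lam_up :: "('d set \<Rightarrow> ('d \<times> 'd) set) \<Rightarrow> 'd measure \<Rightarrow> nat \<Rightarrow> 'd \<Rightarrow> real" where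
  "E_lam_up G P N z = (\<integral> v. lam_up G N (v ` {..<N}) z \<partial>sample_law P N)"

definition E_lam_dn :: "('d set \<Rightarrow> ('d \<times> 'd) set) \<Rightarrow> 'd measure \<Rightarrow> nat \<Rightarrow> 'd \<Rightarrow> real" where
  "E_lam_dn G P N z = (\<integral> v. lam_dn G N (v ` {..<N}) z \<partial>sample_law P N)"

text \<open>Limit functions lambda-up, lambda-down (zero where the limit does not exist).\<close>
definition lam_up_lim :: "('d set \<Rightarrow> ('d \<times> 'd) set) \<Rightarrow> 'd measure \<Rightarrow> 'd \<Rightarrow> real" where
  "lam_up_lim G P z = lim0 (\<lambda>N. E_lam_up G P N z)"

definition lam_dn_lim :: "('d set \<Rightarrow> ('d \<times> 'd) set) \<Rightarrow> 'd measure \<Rightarrow> 'd \<Rightarrow> real" where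
  "lam_dn_lim G P z = lim0 (\<lambda>N. E_lam_dn G P N z)"

definition conv_in_prob :: "(nat \<Rightarrow> 'a measure) \<Rightarrow> (nat \<Rightarrow> 'a \<Rightarrow> real) \<Rightarrow> real \<Rightarrow> bool" where
  "conv_in_prob Ms X c \<longleftrightarrow>
     (\<forall>e>0. (\<lambda>N. measure (Ms N) {x \<in> space (Ms N). e < \<bar>X N x - c\<bar>}) \<longlonglongrightarrow> 0)"

text \<open>Condition (C) for the pair (G, P) with P = P_theta1 having density f1, score component
  s z = <h, eta(z,theta1)> and gradient component g z = <h, grad f(z|theta1)>.\<close>
definition cond_C ::
  "('d::euclidean_space set \<Rightarrow> ('d \<times> 'd) set) \<Rightarrow> 'd measure \<Rightarrow> ('d \<Rightarrow> real) \<Rightarrow> ('d \<Rightarrow> real) \<Rightarrow> bool" where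
  "cond_C G P s g \<longleftrightarrow>
     (AE z in lborel. convergent (\<lambda>N. E_lam_up G P N z)) \<and>
     (AE z in lborel. convergent (\<lambda>N. E_lam_dn G P N z)) \<and>
     conv_in_prob (sample_law P)
       (\<lambda>N v. (1 / real N) * (\<Sum>i<N. s (v i) * lam_up G N (v ` {..<N}) (v i)))
       (\<integral> z. g z * lam_up_lim G P z \<partial>lborel) \<and>
     conv_in_prob (sample_law P)
       (\<lambda>N v. (1 / real N) * (\<Sum>i<N. s (v i) * lam_dn G N (v ` {..<N}) (v i)))
       (\<integral> z. g z * lam_dn_lim G P z \<partial>lborel)"

definition cond_cov :: "'a measure \<Rightarrow> 'a measure \<Rightarrow> ('a \<Rightarrow> real) \<Rightarrow> ('a \<Rightarrow> real) \<Rightarrow> 'a \<Rightarrow> real" where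
  "cond_cov M F X Y = real_cond_exp M F
     (\<lambda>\<omega>. (X \<omega> - real_cond_exp M F X \<omega>) * (Y \<omega> - real_cond_exp M F Y \<omega>))"

text \<open>Labels: c N i w = True means c_i = 1 at stage N, False means c_i = 2. Indices 0..N-1.\<close>
definition boot_T :: "('d set \<Rightarrow> ('d \<times> 'd) set) \<Rightarrow> (nat \<Rightarrow> 'w \<Rightarrow> 'd) \<Rightarrow> (nat \<Rightarrow> nat \<Rightarrow> 'w \<Rightarrow> bool)
    \<Rightarrow> nat \<Rightarrow> 'w \<Rightarrow> real" where
  "boot_T G Z c N \<omega> =
     (\<Sum>i<N. \<Sum>j<N. if i \<noteq> j \<and> c N i \<omega> \<and> \<not> c N j \<omega> \<and>
          (Z i \<omega>, Z j \<omega>) \<in> G ((\<lambda>k. Z k \<omega>) ` {..<N}) then 1 else 0)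
     / real (card (G ((\<lambda>k. Z k \<omega>) ` {..<N})))"

definition boot_R :: "('d set \<Rightarrow> ('d \<times> 'd) set) \<Rightarrow> (nat \<Rightarrow> 'w \<Rightarrow> 'd) \<Rightarrow> (nat \<Rightarrow> nat \<Rightarrow> 'w \<Rightarrow> bool)
    \<Rightarrow> (nat \<Rightarrow> nat) \<Rightarrow> nat \<Rightarrow> 'w \<Rightarrow> real" where
  "boot_R G Z c N1 N \<omega> = sqrt (real N) *
     (boot_T G Z c N \<omega> - real (N1 N) * real (N - N1 N) / (real N * (real N - 1)))"

definition boot_L :: "('d \<Rightarrow> real) \<Rightarrow> (nat \<Rightarrow> 'w \<Rightarrow> 'd) \<Rightarrow> (nat \<Rightarrow> nat \<Rightarrow> 'w \<Rightarrow> bool) \<Rightarrow> nat \<Rightarrow> 'w \<Rightarrow> real" where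
  "boot_L s Z c N \<omega> = (1 / sqrt (real N)) * (\<Sum>i<N. s (Z i \<omega>) * (if c N i \<omega> then 0 else 1))"

end

theory Submission
  imports Defs
begin


context prob_space begin

lemma cexp_indep_ind:
  assumes subalg: "subalgebra M F"
    and B: "B \<in> events"
    and ind: "\<And>A. A \<in> sets F \<Longrightarrow> prob (A \<inter> B) = prob A * prob B"
    and g: "g \<in> borel_measurable F" "integrable M g"
  shows "AE x in M. real_cond_exp M F (\<lambda>x. g x * indicator B x) x = g x * prob B"
proof -
  interpret fs: finite_measure_subalgebra M F
    by unfold_locales (rule subalg)
  have gM: "g \<in> borel_measurable M" using g(2) by auto
  have int: "integrable M (\<lambda>x. g x * indicator B x)"
    using integrable_mult_indicator[OF B g(2)] by (simp add: mult.commute)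
  have 1: "AE x in M. real_cond_exp M F (\<lambda>x. g x * indicator B x) x = g x * real_cond_exp M F (indicator B) x"
    by (rule fs.real_cond_exp_mult) (use g B int in auto)
  have 2: "AE x in M. real_cond_exp M F (indicator B) x = prob B"
  proof (rule fs.real_cond_exp_charact)
    fix A assume A: "A \<in> sets F"
    then have AM: "A \<in> events" using subalg by (meson subalgebra_def subsetD)
    have "(\<integral>x\<in>A. indicator B x \<partial>M) = prob (A \<inter> B)"
      unfolding set_lebesgue_integral_def
      using sets.sets_into_space[OF B]
      by (simp add: indicator_inter_arith[symmetric] AM B Int_absorb2 Int_assoc)
    also have "\<dots> = prob A * prob B" using ind A by simp
    also have "\<dots> = (\<integral>x\<in>A. prob B \<partial>M)"
      unfolding set_lebesgue_integral_def using AM by simp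
    finally show "(\<integral>x\<in>A. indicator B x \<partial>M) = (\<integral>x\<in>A. prob B \<partial>M)" .
  next
    show "integrable M (indicator B :: _ \<Rightarrow> real)"
      using integrable_mult_indicator[OF B integrable_const[of "1::real"]] by simp
  qed auto
  from 1 2 show ?thesis by auto
qed


lemma cexp_lincomb:
  assumes subalg: "subalgebra M F"
    and Cev: "Cev \<subseteq> events"
    and ind: "\<And>A E. A \<in> sets F \<Longrightarrow> E \<in> Cev \<Longrightarrow> prob (A \<inter> E) = prob A * prob E"
    and I: "finite I"
    and E: "\<And>t. t \<in> I \<Longrightarrow> E t \<in> Cev"
    and gF: "\<And>t. t \<in> I \<Longrightarrow> g t \<in> borel_measurable F"
    and gi: "\<And>t. t \<in> I \<Longrightarrow> integrable M (g t)"
    and hF: "h \<in> borel_measurable F" and hi: "integrable M h"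
    and fM: "f \<in> borel_measurable M"
    and feq: "AE x in M. f x = h x + (\<Sum>t\<in>I. g t x * indicator (E t) x)"
  shows "AE x in M. real_cond_exp M F f x = h x + (\<Sum>t\<in>I. g t x * prob (E t))"
proof -
  interpret fs: finite_measure_subalgebra M F
    by unfold_locales (rule subalg)
  define ff where "ff t = (if t \<in> I then (\<lambda>x. g t x * indicator (E t) x) else (\<lambda>x. 0::real))" for t
  have ffi: "integrable M (ff t)" for t
  proof (cases "t \<in> I")
    case True
    then have "E t \<in> events" using E Cev by auto
    then show ?thesis using integrable_mult_indicator[OF _ gi[OF True], of "E t"] True
      by (simp add: ff_def mult.commute)
  qed (simp add: ff_def)
  have hM: "h \<in> borel_measurable M" using hi by auto
  have S_eq: "(\<Sum>t\<in>I. ff t x) = (\<Sum>t\<in>I. g t x * indicator (E t) x)" for x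
    by (rule sum.cong) (auto simp: ff_def)
  have SM: "(\<lambda>x. \<Sum>t\<in>I. ff t x) \<in> borel_measurable M"
    using ffi by auto
  have Si: "integrable M (\<lambda>x. \<Sum>t\<in>I. ff t x)" using ffi by auto
  have 1: "AE x in M. real_cond_exp M F f x = real_cond_exp M F (\<lambda>x. h x + (\<Sum>t\<in>I. ff t x)) x"
    by (rule fs.real_cond_exp_cong) (use feq S_eq fM hM SM in auto)
  have 2: "AE x in M. real_cond_exp M F (\<lambda>x. h x + (\<Sum>t\<in>I. ff t x)) x
           = real_cond_exp M F h x + real_cond_exp M F (\<lambda>x. \<Sum>t\<in>I. ff t x) x"
    by (rule fs.real_cond_exp_add) (use hi Si in auto)
  have 3: "AE x in M. real_cond_exp M F h x = h x"
    by (rule fs.real_cond_exp_F_meas) (use hi hF in auto)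
  have 4: "AE x in M. real_cond_exp M F (\<lambda>x. \<Sum>t\<in>I. ff t x) x = (\<Sum>t\<in>I. real_cond_exp M F (ff t) x)"
    by (rule fs.real_cond_exp_sum) (rule ffi)
  have 5: "AE x in M. \<forall>t\<in>I. real_cond_exp M F (ff t) x = g t x * prob (E t)"
  proof (rule AE_finite_allI[OF I])
    fix t assume t: "t \<in> I"
    have "ff t = (\<lambda>x. g t x * indicator (E t) x)" using t by (simp add: ff_def)
    then show "AE x in M. real_cond_exp M F (ff t) x = g t x * prob (E t)"
      using cexp_indep_ind[OF subalg _ _ gF[OF t] gi[OF t], of "E t"] E[OF t] Cev ind[of _ "E t"] t
      by auto
  qed
  from 1 2 3 4 5 show ?thesis by auto
qed


lemma integrable_bdd_mult:
  assumes "a \<in> borel_measurable M" "\<And>x. \<bar>a x\<bar> \<le> (1::real)" "integrable M f"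
  shows "integrable M (\<lambda>x. a x * f x)"
proof (rule Bochner_Integration.integrable_bound[OF assms(3)])
  show "(\<lambda>x. a x * f x) \<in> borel_measurable M" using assms by auto
  show "AE x in M. norm (a x * f x) \<le> norm (f x)"
    using assms(2) by (auto simp: abs_mult intro!: mult_left_le_one_le)
qed


lemma sum2_prod: "(\<Sum>i\<in>A. \<Sum>j\<in>B. f i j) = (\<Sum>t\<in>A\<times>B. f (fst t) (snd t))"
  by (simp add: sum.cartesian_product split_beta)

lemma prod_expand:
  fixes a :: "nat \<Rightarrow> nat \<Rightarrow> real" and sv cI :: "nat \<Rightarrow> real" and bI :: "nat \<Rightarrow> nat \<Rightarrow> real"
  shows "(sqrt N * ((\<Sum>i<N. \<Sum>j<N. a i j * bI i j) - K) - sqrt N * ((\<Sum>i<N. \<Sum>j<N. a i j * \<alpha>) - K)) *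
         ((1 / sqrt N) * (\<Sum>k<N. sv k * cI k) - (1 / sqrt N) * (\<Sum>k<N. sv k * \<beta>))
       = \<alpha> * \<beta> * (\<Sum>i<N. \<Sum>j<N. \<Sum>k<N. a i j * sv k)
         + (\<Sum>i<N. \<Sum>j<N. \<Sum>k<N. a i j * sv k * (bI i j * cI k) - \<beta> * (a i j * sv k * bI i j) - \<alpha> * (a i j * sv k * cI k))"
proof (cases "N = 0")
  case True then show ?thesis by simp
next
  case False
  have sN: "sqrt (real N) * (1 / sqrt N) = 1" using False by simp
  have "(sqrt N * ((\<Sum>i<N. \<Sum>j<N. a i j * bI i j) - K) - sqrt N * ((\<Sum>i<N. \<Sum>j<N. a i j * \<alpha>) - K)) *
         ((1 / sqrt N) * (\<Sum>k<N. sv k * cI k) - (1 / sqrt N) * (\<Sum>k<N. sv k * \<beta>))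
      = (sqrt N * (1 / sqrt N)) * ((\<Sum>i<N. \<Sum>j<N. a i j * (bI i j - \<alpha>)) * (\<Sum>k<N. sv k * (cI k - \<beta>)))"
    by (simp add: algebra_simps sum_subtractf)
  also have "\<dots> = (\<Sum>i<N. \<Sum>j<N. \<Sum>k<N. a i j * (bI i j - \<alpha>) * (sv k * (cI k - \<beta>)))"
    by (simp only: sN mult_1 sum_distrib_right) (simp only: sum_distrib_left)
  also have "\<dots> = (\<Sum>i<N. \<Sum>j<N. \<Sum>k<N. \<alpha> * \<beta> * (a i j * sv k) + (a i j * sv k * (bI i j * cI k) - \<beta> * (a i j * sv k * bI i j) - \<alpha> * (a i j * sv k * cI k)))"
    by (intro sum.cong refl) (simp add: algebra_simps)
  also have "\<dots> = \<alpha> * \<beta> * (\<Sum>i<N. \<Sum>j<N. \<Sum>k<N. a i j * sv k)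
         + (\<Sum>i<N. \<Sum>j<N. \<Sum>k<N. a i j * sv k * (bI i j * cI k) - \<beta> * (a i j * sv k * bI i j) - \<alpha> * (a i j * sv k * cI k))"
    by (simp only: sum.distrib sum_distrib_left)
  finally show ?thesis .
qed

lemma sum_I3:
  "(\<Sum>t\<in>(A\<times>B\<times>C)\<times>{0::nat,1,2}. f (fst (fst t)) (fst (snd (fst t))) (snd (snd (fst t))) (snd t))
   = (\<Sum>i\<in>A. \<Sum>j\<in>B. \<Sum>k\<in>C. f i j k 0 + f i j k 1 + f i j k 2)"
proof -
  have "(\<Sum>t\<in>(A\<times>B\<times>C)\<times>{0::nat,1,2}. f (fst (fst t)) (fst (snd (fst t))) (snd (snd (fst t))) (snd t))
      = (\<Sum>u\<in>A\<times>B\<times>C. \<Sum>l\<in>{0::nat,1,2}. f (fst u) (fst (snd u)) (snd (snd u)) l)"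
    by (rule sum2_prod[symmetric])
  also have "\<dots> = (\<Sum>i\<in>A. \<Sum>v\<in>B\<times>C. \<Sum>l\<in>{0::nat,1,2}. f i (fst v) (snd v) l)"
    by (rule sum2_prod[symmetric, where f="\<lambda>i v. \<Sum>l\<in>{0::nat,1,2}. f i (fst v) (snd v) l"])
  also have "\<dots> = (\<Sum>i\<in>A. \<Sum>j\<in>B. \<Sum>k\<in>C. \<Sum>l\<in>{0::nat,1,2}. f i j k l)"
    by (simp only: sum2_prod[symmetric, where f="\<lambda>j k. \<Sum>l\<in>{0::nat,1,2}. f _ j k l"])
  also have "\<dots> = (\<Sum>i\<in>A. \<Sum>j\<in>B. \<Sum>k\<in>C. f i j k 0 + f i j k 1 + f i j k 2)"
    by (simp add: add.assoc)
  finally show ?thesis .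
qed

lemma cond_cov_abstract:
  fixes N :: nat and a :: "nat \<Rightarrow> nat \<Rightarrow> 'a \<Rightarrow> real" and sv :: "nat \<Rightarrow> 'a \<Rightarrow> real"
    and B :: "nat \<Rightarrow> nat \<Rightarrow> 'a set" and C :: "nat \<Rightarrow> 'a set" and K \<alpha> \<beta> :: real
  assumes subalg: "subalgebra M F"
    and Cev: "Cev \<subseteq> events"
    and ind: "\<And>A E. A \<in> sets F \<Longrightarrow> E \<in> Cev \<Longrightarrow> prob (A \<inter> E) = prob A * prob E"
    and aF: "\<And>i j. a i j \<in> borel_measurable F"
    and abd: "\<And>i j x. \<bar>a i j x\<bar> \<le> 1"
    and aii: "\<And>i x. a i i x = 0"
    and svF: "\<And>k. sv k \<in> borel_measurable F"
    and svi: "\<And>k. integrable M (sv k)"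
    and BC: "\<And>i j k. i < N \<Longrightarrow> j < N \<Longrightarrow> k < N \<Longrightarrow> B i j \<in> Cev \<and> C k \<in> Cev \<and> B i j \<inter> C k \<in> Cev"
    and pB: "\<And>i j. i < N \<Longrightarrow> j < N \<Longrightarrow> i \<noteq> j \<Longrightarrow> prob (B i j) = \<alpha>"
    and pC: "\<And>k. k < N \<Longrightarrow> prob (C k) = \<beta>"
    and pBC: "\<And>i j k. i < N \<Longrightarrow> j < N \<Longrightarrow> k < N \<Longrightarrow> i \<noteq> j \<Longrightarrow>
               prob (B i j \<inter> C k) = (if k = i then 0 else if k = j then \<alpha> else \<alpha> * \<beta>)"
    and XM: "X \<in> borel_measurable M" and YM: "Y \<in> borel_measurable M"
    and Xeq: "AE x in M. X x = sqrt N * ((\<Sum>i<N. \<Sum>j<N. a i j x * indicator (B i j) x) - K)"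
    and Yeq: "AE x in M. Y x = (1 / sqrt N) * (\<Sum>k<N. sv k x * indicator (C k) x)"
  shows "AE x in M. cond_cov M F X Y x =
            (\<Sum>i<N. \<Sum>j<N. a i j x * (\<alpha> * (1 - \<beta>) * sv j x - \<alpha> * \<beta> * sv i x))"
proof -
  have aM: "a i j \<in> borel_measurable M" for i j using aF measurable_from_subalg[OF subalg] by blast
  have svM: "sv k \<in> borel_measurable M" for k using svF measurable_from_subalg[OF subalg] by blast
  define x0 where "x0 x = sqrt N * ((\<Sum>i<N. \<Sum>j<N. a i j x * \<alpha>) - K)" for x
  define y0 where "y0 x = (1 / sqrt N) * (\<Sum>k<N. sv k x * \<beta>)" for x
  have x0F: "x0 \<in> borel_measurable F" unfolding x0_def using aF by measurable
  have y0F: "y0 \<in> borel_measurable F" unfolding y0_def using svF by measurable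
  have x0M: "x0 \<in> borel_measurable M" using x0F measurable_from_subalg[OF subalg] by blast
  have y0M: "y0 \<in> borel_measurable M" using y0F measurable_from_subalg[OF subalg] by blast
  have EX: "AE x in M. real_cond_exp M F X x = x0 x"
  proof -
    have "AE x in M. real_cond_exp M F X x = - sqrt N * K + (\<Sum>t\<in>{..<N}\<times>{..<N}. sqrt N * a (fst t) (snd t) x * prob (B (fst t) (snd t)))"
    proof (rule cexp_lincomb[OF subalg Cev ind])
      show "AE x in M. X x = - sqrt N * K + (\<Sum>t\<in>{..<N}\<times>{..<N}. sqrt N * a (fst t) (snd t) x * indicator (B (fst t) (snd t)) x)"
        using Xeq by eventually_elim
          (simp only: sum2_prod[of _ "{..<N}" "{..<N}"] sum_distrib_left[symmetric] mult.assoc, simp add: algebra_simps)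
      show "integrable M (\<lambda>x. - sqrt N * K)" by simp
      show "integrable M (\<lambda>x. sqrt N * a (fst t) (snd t) x)" for t
        by (rule integrable_mult_right) (use integrable_bdd_mult[OF aM abd, of "\<lambda>_. 1"] in simp)
    qed (use BC aF XM in auto)
    moreover have B: "(\<Sum>t\<in>{..<N}\<times>{..<N}. sqrt N * a (fst t) (snd t) x * prob (B (fst t) (snd t)))
        = (\<Sum>t\<in>{..<N}\<times>{..<N}. sqrt N * a (fst t) (snd t) x * \<alpha>)" for x
      by (rule sum.cong) (auto simp: pB aii, metis aii pB)
    ultimately show ?thesis
      apply - apply (erule AE_mp) apply (rule AE_I2) apply (simp only: B)
      by (simp only: x0_def sum2_prod[of _ "{..<N}" "{..<N}"] sum_distrib_left[symmetric] mult.assoc, simp add: algebra_simps)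
  qed
  have EY: "AE x in M. real_cond_exp M F Y x = y0 x"
  proof -
    have "AE x in M. real_cond_exp M F Y x = 0 + (\<Sum>k\<in>{..<N}. (1 / sqrt N) * sv k x * prob (C k))"
    proof (rule cexp_lincomb[OF subalg Cev ind])
      show "AE x in M. Y x = 0 + (\<Sum>k\<in>{..<N}. (1 / sqrt N) * sv k x * indicator (C k) x)"
        using Yeq by eventually_elim (simp only: sum_distrib_left mult.assoc add_0_left)
      show "integrable M (\<lambda>x. (1 / sqrt N) * sv k x)" for k
        by (rule integrable_mult_right) (rule svi)
    qed (use BC svF YM in auto)
    then show ?thesis
      by eventually_elim (simp add: y0_def pC sum_distrib_left mult.assoc)
  qed
  interpret fs: finite_measure_subalgebra M F
    by unfold_locales (rule subalg)
  have cc: "AE x in M. cond_cov M F X Y x = real_cond_exp M F (\<lambda>x. (X x - x0 x) * (Y x - y0 x)) x"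
    unfolding cond_cov_def
    by (rule fs.real_cond_exp_cong) (use EX EY XM YM x0M y0M in auto)
  define I where "I = ({..<N}\<times>{..<N}\<times>{..<N}) \<times> {0::nat,1,2}"
  define co where "co l = (if l = (0::nat) then 1 else if l = 1 then - \<beta> else - \<alpha>)" for l
  define gg where "gg (t::(nat\<times>nat\<times>nat)\<times>nat) = (\<lambda>x. co (snd t) * (a (fst (fst t)) (fst (snd (fst t))) x * sv (snd (snd (fst t))) x))" for t
  define EE where "EE (t::(nat\<times>nat\<times>nat)\<times>nat) = (if snd t = 0 then B (fst (fst t)) (fst (snd (fst t))) \<inter> C (snd (snd (fst t)))
      else if snd t = 1 then B (fst (fst t)) (fst (snd (fst t))) else C (snd (snd (fst t))))" for t
  define hh where "hh x = \<alpha> * \<beta> * (\<Sum>i<N. \<Sum>j<N. \<Sum>k<N. a i j x * sv k x)" for x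
  have asvi: "integrable M (\<lambda>x. a i j x * sv k x)" for i j k
    by (rule integrable_bdd_mult[OF aM abd svi])
  have main: "AE x in M. real_cond_exp M F (\<lambda>x. (X x - x0 x) * (Y x - y0 x)) x
      = hh x + (\<Sum>t\<in>I. gg t x * prob (EE t))"
  proof (rule cexp_lincomb[OF subalg Cev ind])
    show "finite I" by (simp add: I_def)
    show "EE t \<in> Cev" if "t \<in> I" for t using that BC by (auto simp: I_def EE_def)
    show "gg t \<in> borel_measurable F" for t unfolding gg_def using aF svF by measurable
    show "integrable M (gg t)" for t unfolding gg_def by (rule integrable_mult_right) (rule asvi)
    show "hh \<in> borel_measurable F" unfolding hh_def using aF svF by measurable
    show "integrable M hh" unfolding hh_def
      by (rule integrable_mult_right) (intro Bochner_Integration.integrable_sum asvi)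
    show "(\<lambda>x. (X x - x0 x) * (Y x - y0 x)) \<in> borel_measurable M" using XM YM x0M y0M by measurable
    show "AE x in M. (X x - x0 x) * (Y x - y0 x) = hh x + (\<Sum>t\<in>I. gg t x * indicator (EE t) x)"
      using Xeq Yeq
    proof eventually_elim
      case (elim x)
      have "(\<Sum>t\<in>I. gg t x * indicator (EE t) x) = (\<Sum>i<N. \<Sum>j<N. \<Sum>k<N. a i j x * sv k x * (indicator (B i j) x * indicator (C k) x) - \<beta> * (a i j x * sv k x * indicator (B i j) x) - \<alpha> * (a i j x * sv k x * indicator (C k) x))"
        unfolding I_def gg_def EE_def
        by (subst sum_I3[where f="\<lambda>i j k l. co l * (a i j x * sv k x) * indicator (if l = 0 then B i j \<inter> C k else if l = 1 then B i j else C k) x"])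
           (simp add: co_def indicator_inter_arith algebra_simps)
      then show ?case using elim unfolding x0_def y0_def hh_def
        by (simp only: prod_expand)
    qed
  qed
  have fin: "hh x + (\<Sum>t\<in>I. gg t x * prob (EE t)) = (\<Sum>i<N. \<Sum>j<N. a i j x * (\<alpha> * (1 - \<beta>) * sv j x - \<alpha> * \<beta> * sv i x))" for x
  proof -
    have "(\<Sum>t\<in>I. gg t x * prob (EE t)) = (\<Sum>i<N. \<Sum>j<N. \<Sum>k<N. co 0 * (a i j x * sv k x) * prob (B i j \<inter> C k)
          + co 1 * (a i j x * sv k x) * prob (B i j) + co 2 * (a i j x * sv k x) * prob (C k))"
      unfolding I_def gg_def EE_def
      by (subst sum_I3[where f="\<lambda>i j k l. co l * (a i j x * sv k x) * prob (if l = 0 then B i j \<inter> C k else if l = 1 then B i j else C k)"])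
         simp
    then have "hh x + (\<Sum>t\<in>I. gg t x * prob (EE t)) = (\<Sum>i<N. \<Sum>j<N. \<Sum>k<N. a i j x * sv k x *
           (prob (B i j \<inter> C k) - \<beta> * prob (B i j) - \<alpha> * prob (C k) + \<alpha> * \<beta>))"
      unfolding hh_def by (simp add: co_def sum_distrib_left sum.distrib[symmetric] algebra_simps)
    also have "\<dots> = (\<Sum>i<N. \<Sum>j<N. a i j x * (\<alpha> * (1 - \<beta>) * sv j x - \<alpha> * \<beta> * sv i x))"
    proof (intro sum.cong refl)
      fix i j assume i: "i \<in> {..<N}" and j: "j \<in> {..<N}"
      show "(\<Sum>k<N. a i j x * sv k x * (prob (B i j \<inter> C k) - \<beta> * prob (B i j) - \<alpha> * prob (C k) + \<alpha> * \<beta>))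
          = a i j x * (\<alpha> * (1 - \<beta>) * sv j x - \<alpha> * \<beta> * sv i x)"
      proof (cases "i = j")
        case True then show ?thesis by (simp add: aii)
      next
        case False
        have "(\<Sum>k<N. a i j x * sv k x * (prob (B i j \<inter> C k) - \<beta> * prob (B i j) - \<alpha> * prob (C k) + \<alpha> * \<beta>))
            = (\<Sum>k<N. (if k = i then a i j x * sv i x * (- \<alpha> * \<beta>) else 0) + (if k = j then a i j x * sv j x * (\<alpha> - \<alpha> * \<beta>) else 0))"
          using i j False by (intro sum.cong refl) (auto simp: pBC pB pC)
        also have "\<dots> = a i j x * sv i x * (- \<alpha> * \<beta>) + a i j x * sv j x * (\<alpha> - \<alpha> * \<beta>)"
          using i j by (simp add: sum.distrib)
        finally show ?thesis by (simp add: algebra_simps)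
      qed
    qed
    finally show ?thesis .
  qed
  from cc main show ?thesis by eventually_elim (simp add: fin)
qed

end


definition mlt :: "nat \<Rightarrow> (nat \<Rightarrow> 'd) \<Rightarrow> nat \<Rightarrow> real" where
  "mlt N v i = real (card {k\<in>{..<N}. v k = v i})"

definition edg :: "('d set \<Rightarrow> ('d \<times> 'd) set) \<Rightarrow> nat \<Rightarrow> (nat \<Rightarrow> 'd) \<Rightarrow> nat \<Rightarrow> nat \<Rightarrow> real" where
  "edg G N v i j = (if (v i, v j) \<in> G (v ` {..<N}) then 1 else 0)"

lemma sum_over_image:
  fixes g :: "'b \<Rightarrow> real"
  assumes "finite A"
  shows "(\<Sum>y\<in>f ` A. g y) = (\<Sum>i\<in>A. g (f i) / real (card {k\<in>A. f k = f i}))"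
proof -
  have "(\<Sum>i\<in>A. g (f i) / real (card {k\<in>A. f k = f i}))
      = (\<Sum>y\<in>f ` A. \<Sum>i\<in>{x\<in>A. f x = y}. g (f i) / real (card {k\<in>A. f k = f i}))"
    by (rule sum.image_gen[OF assms])
  also have "\<dots> = (\<Sum>y\<in>f ` A. g y)"
  proof (rule sum.cong[OF refl])
    fix y assume y: "y \<in> f ` A"
    then have ne: "{x\<in>A. f x = y} \<noteq> {}" by auto
    have fin: "finite {x\<in>A. f x = y}" using assms by auto
    have "(\<Sum>i\<in>{x\<in>A. f x = y}. g (f i) / real (card {k\<in>A. f k = f i}))
        = (\<Sum>i\<in>{x\<in>A. f x = y}. g y / real (card {k\<in>A. f k = y}))"
      by (rule sum.cong) auto
    also have "\<dots> = g y" using ne fin by (simp add: card_gt_0_iff)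
    finally show "(\<Sum>i\<in>{x\<in>A. f x = y}. g (f i) / real (card {k\<in>A. f k = f i})) = g y" .
  qed
  finally show ?thesis ..
qed

lemma card_sub_eq_sum:
  assumes "finite S" "{y. P y} \<subseteq> S"
  shows "real (card {y. P y}) = (\<Sum>y\<in>S. if P y then 1 else 0)"
proof -
  have "{y. P y} = {y\<in>S. P y}" using assms by auto
  moreover have "S \<inter> {y \<in> S. P y} = {y \<in> S. P y}" by auto
  ultimately show ?thesis using assms by (simp add: sum.If_cases)
qed

lemma card_pairs_eq_sum:
  assumes "finite S" "E \<subseteq> S \<times> S"
  shows "real (card E) = (\<Sum>x\<in>S. \<Sum>y\<in>S. if (x, y) \<in> E then 1 else 0)"
proof -
  have "real (card E) = (\<Sum>p\<in>S \<times> S. if p \<in> E then 1 else 0)"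
    using card_sub_eq_sum[of "S \<times> S" "\<lambda>p. p \<in> E"] assms by auto
  also have "\<dots> = (\<Sum>x\<in>S. \<Sum>y\<in>S. if (x, y) \<in> E then 1 else 0)"
    by (simp add: sum.cartesian_product)
  finally show ?thesis .
qed

lemma card_G_formula:
  assumes G: "dir_graph_functional G"
  shows "real (card (G (v ` {..<N}))) = (\<Sum>i<N. \<Sum>j<N. edg G N v i j / (mlt N v i * mlt N v j))"
proof -
  let ?S = "v ` {..<N}"
  have sub: "G ?S \<subseteq> ?S \<times> ?S" using G by (auto simp: dir_graph_functional_def)
  have "real (card (G ?S)) = (\<Sum>x\<in>?S. \<Sum>y\<in>?S. if (x, y) \<in> G ?S then 1 else 0)"
    by (rule card_pairs_eq_sum[OF _ sub]) simp
  also have "\<dots> = (\<Sum>i<N. (\<Sum>y\<in>?S. if (v i, y) \<in> G ?S then 1 else 0) / mlt N v i)"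
    by (subst sum_over_image) (auto simp: mlt_def)
  also have "\<dots> = (\<Sum>i<N. (\<Sum>j<N. edg G N v i j / mlt N v j) / mlt N v i)"
    by (subst sum_over_image) (auto simp: mlt_def edg_def)
  also have "\<dots> = (\<Sum>i<N. \<Sum>j<N. edg G N v i j / (mlt N v i * mlt N v j))"
    by (simp add: sum_divide_distrib mult.commute)
  finally show ?thesis .
qed

lemma out_deg_formula:
  assumes G: "dir_graph_functional G" and i: "i < N"
  shows "real (out_deg G (v ` {..<N}) (v i)) = (\<Sum>j<N. edg G N v i j / mlt N v j)"
proof -
  let ?S = "v ` {..<N}"
  have ins: "insert (v i) ?S = ?S" using i by auto
  have sub: "{y. (v i, y) \<in> G ?S} \<subseteq> ?S" using G by (auto simp: dir_graph_functional_def)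
  have "real (out_deg G ?S (v i)) = (\<Sum>y\<in>?S. if (v i, y) \<in> G ?S then 1 else 0)"
    unfolding out_deg_def ins by (rule card_sub_eq_sum[OF _ sub]) simp
  also have "\<dots> = (\<Sum>j<N. edg G N v i j / mlt N v j)"
    by (subst sum_over_image) (auto simp: mlt_def edg_def)
  finally show ?thesis .
qed

lemma in_deg_formula:
  assumes G: "dir_graph_functional G" and i: "i < N"
  shows "real (in_deg G (v ` {..<N}) (v i)) = (\<Sum>j<N. edg G N v j i / mlt N v j)"
proof -
  let ?S = "v ` {..<N}"
  have ins: "insert (v i) ?S = ?S" using i by auto
  have sub: "{y. (y, v i) \<in> G ?S} \<subseteq> ?S" using G by (auto simp: dir_graph_functional_def)
  have "real (in_deg G ?S (v i)) = (\<Sum>y\<in>?S. if (y, v i) \<in> G ?S then 1 else 0)"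
    unfolding in_deg_def ins by (rule card_sub_eq_sum[OF _ sub]) simp
  also have "\<dots> = (\<Sum>j<N. edg G N v j i / mlt N v j)"
    by (subst sum_over_image) (auto simp: mlt_def edg_def)
  finally show ?thesis .
qed



abbreviation PB :: "nat \<Rightarrow> (nat \<Rightarrow> 'd::euclidean_space) measure" where
  "PB N \<equiv> PiM {..<N} (\<lambda>_. borel)"

lemma mlt_meas:
  assumes "i < N"
  shows "(\<lambda>v. mlt N v i) \<in> borel_measurable (PB N)"
proof -
  have eq: "(\<lambda>v. mlt N v i) = (\<lambda>v. \<Sum>k<N. if v k = v i then 1 else (0::real))"
    unfolding mlt_def by (rule ext) (simp add: sum.inter_filter[symmetric])
  moreover have "(\<lambda>v. \<Sum>k<N. if v k = v i then 1 else (0::real)) \<in> borel_measurable (PB N)"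
  proof (intro borel_measurable_sum measurable_If)
    fix k assume "k \<in> {..<N}"
    then show "{v \<in> space (PB N). v k = v i} \<in> sets (PB N)"
      using assms by (intro measurable_equality_set measurable_component_singleton) auto
  qed auto
  ultimately show ?thesis by (simp only: eq)
qed

lemma edg_meas:
  assumes GM: "graph_measurable G" and "i < N" "j < N"
  shows "(\<lambda>v. edg G N v i j) \<in> borel_measurable (PB N)"
proof -
  have S: "{v \<in> space (PB N). (v i, v j) \<in> G (v ` {..<N})} \<in> sets (PB N)"
    using GM assms unfolding graph_measurable_def by blast
  have "(\<lambda>v. indicator {v \<in> space (PB N). (v i, v j) \<in> G (v ` {..<N})} v :: real) \<in> borel_measurable (PB N)"
    using S by simp
  then show ?thesis
    by (rule measurable_cong[THEN iffD1, rotated]) (auto simp: edg_def indicator_def)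
qed

definition cardf :: "('d set \<Rightarrow> ('d \<times> 'd) set) \<Rightarrow> nat \<Rightarrow> (nat \<Rightarrow> 'd) \<Rightarrow> real" where
  "cardf G N v = (\<Sum>i<N. \<Sum>j<N. edg G N v i j / (mlt N v i * mlt N v j))"

lemma cardf_meas:
  assumes "graph_measurable G"
  shows "(\<lambda>v. cardf G N v) \<in> borel_measurable (PB N)"
  unfolding cardf_def
  by (intro borel_measurable_sum borel_measurable_divide borel_measurable_times edg_meas mlt_meas assms) auto

lemma lam_dn_eq:
  assumes "dir_graph_functional G" "i < N"
  shows "lam_dn G N (v ` {..<N}) (v i) = real N * (\<Sum>j<N. edg G N v j i / mlt N v j) / cardf G N v"
proof -
  have "insert (v i) (v ` {..<N}) = v ` {..<N}" using assms by auto
  then show ?thesis unfolding lam_dn_def cardf_def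
    using in_deg_formula[OF assms, of v] card_G_formula[OF assms(1), of v N] by simp
qed

lemma lam_up_eq:
  assumes "dir_graph_functional G" "i < N"
  shows "lam_up G N (v ` {..<N}) (v i) = real N * (\<Sum>j<N. edg G N v i j / mlt N v j) / cardf G N v"
proof -
  have "insert (v i) (v ` {..<N}) = v ` {..<N}" using assms by auto
  then show ?thesis unfolding lam_up_def cardf_def
    using out_deg_formula[OF assms, of v] card_G_formula[OF assms(1), of v N] by simp
qed

definition An :: "('d set \<Rightarrow> ('d \<times> 'd) set) \<Rightarrow> ('d \<Rightarrow> real) \<Rightarrow> nat \<Rightarrow> (nat \<Rightarrow> 'd) \<Rightarrow> real" where
  "An G s N v = (1 / real N) * (\<Sum>i<N. s (v i) * lam_dn G N (v ` {..<N}) (v i))"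

definition Bn :: "('d set \<Rightarrow> ('d \<times> 'd) set) \<Rightarrow> ('d \<Rightarrow> real) \<Rightarrow> nat \<Rightarrow> (nat \<Rightarrow> 'd) \<Rightarrow> real" where
  "Bn G s N v = (1 / real N) * (\<Sum>i<N. s (v i) * lam_up G N (v ` {..<N}) (v i))"

lemma An_meas:
  assumes G: "dir_graph_functional G" and GM: "graph_measurable G" and s: "s \<in> borel_measurable borel"
  shows "An G s N \<in> borel_measurable (PB N)"
proof -
  have eq: "An G s N = (\<lambda>v. (1 / real N) * (\<Sum>i<N. s (v i) * (real N * (\<Sum>j<N. edg G N v j i / mlt N v j) / cardf G N v)))"
    unfolding An_def by (intro ext arg_cong2[where f="(*)"] refl sum.cong) (auto simp: lam_dn_eq[OF G])
  show ?thesis unfolding eq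
    by (intro borel_measurable_times borel_measurable_const borel_measurable_sum borel_measurable_divide
        edg_meas mlt_meas cardf_meas GM measurable_compose[OF _ s] measurable_component_singleton) auto
qed

lemma Bn_meas:
  assumes G: "dir_graph_functional G" and GM: "graph_measurable G" and s: "s \<in> borel_measurable borel"
  shows "Bn G s N \<in> borel_measurable (PB N)"
proof -
  have eq: "Bn G s N = (\<lambda>v. (1 / real N) * (\<Sum>i<N. s (v i) * (real N * (\<Sum>j<N. edg G N v i j / mlt N v j) / cardf G N v)))"
    unfolding Bn_def by (intro ext arg_cong2[where f="(*)"] refl sum.cong) (auto simp: lam_up_eq[OF G])
  show ?thesis unfolding eq
    by (intro borel_measurable_times borel_measurable_const borel_measurable_sum borel_measurable_divide
        edg_meas mlt_meas cardf_meas GM measurable_compose[OF _ s] measurable_component_singleton) auto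
qed

definition av :: "('d set \<Rightarrow> ('d \<times> 'd) set) \<Rightarrow> nat \<Rightarrow> (nat \<Rightarrow> 'd) \<Rightarrow> nat \<Rightarrow> nat \<Rightarrow> real" where
  "av G N v i j = (if i < N \<and> j < N then edg G N v i j / cardf G N v else 0)"

definition Vv :: "('d set \<Rightarrow> ('d \<times> 'd) set) \<Rightarrow> ('d \<Rightarrow> real) \<Rightarrow> real \<Rightarrow> real \<Rightarrow> nat \<Rightarrow> (nat \<Rightarrow> 'd) \<Rightarrow> real" where
  "Vv G s u w N v = (\<Sum>i<N. \<Sum>j<N. av G N v i j * (u * s (v j) - w * s (v i)))"

lemma mlt_inj: "inj_on v {..<N} \<Longrightarrow> i < N \<Longrightarrow> mlt N v i = 1"
  unfolding mlt_def
proof -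
  assume inj: "inj_on v {..<N}" and i: "i < N"
  have "{k \<in> {..<N}. v k = v i} = {i}" using inj i by (auto dest: inj_onD)
  then show "real (card {k \<in> {..<N}. v k = v i}) = 1" by simp
qed

lemma Vv_inj:
  assumes G: "dir_graph_functional G" and inj: "inj_on v {..<N}"
  shows "Vv G s u w N v = u * An G s N v - w * Bn G s N v"
proof -
  have m1: "\<And>i. i < N \<Longrightarrow> mlt N v i = 1" using mlt_inj[OF inj] .
  have An: "An G s N v = (\<Sum>i<N. \<Sum>j<N. edg G N v i j * s (v j)) / cardf G N v"
  proof (cases "N = 0")
    case False
    have "An G s N v = (1 / real N) * (\<Sum>i<N. s (v i) * (real N * (\<Sum>j<N. edg G N v j i) / cardf G N v))"
      unfolding An_def by (intro arg_cong2[where f="(*)"] refl sum.cong) (auto simp: lam_dn_eq[OF G] m1)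
    also have "\<dots> = (\<Sum>i<N. \<Sum>j<N. edg G N v j i * s (v i)) / cardf G N v"
      using False by (simp add: sum_distrib_left sum_distrib_right sum_divide_distrib algebra_simps)
    also have "\<dots> = (\<Sum>i<N. \<Sum>j<N. edg G N v i j * s (v j)) / cardf G N v"
      by (subst sum.swap) simp
    finally show ?thesis .
  qed (simp add: An_def)
  have Bn: "Bn G s N v = (\<Sum>i<N. \<Sum>j<N. edg G N v i j * s (v i)) / cardf G N v"
  proof (cases "N = 0")
    case False
    have "Bn G s N v = (1 / real N) * (\<Sum>i<N. s (v i) * (real N * (\<Sum>j<N. edg G N v i j) / cardf G N v))"
      unfolding Bn_def by (intro arg_cong2[where f="(*)"] refl sum.cong) (auto simp: lam_up_eq[OF G] m1)
    also have "\<dots> = (\<Sum>i<N. \<Sum>j<N. edg G N v i j * s (v i)) / cardf G N v"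
      using False by (simp add: sum_distrib_left sum_distrib_right sum_divide_distrib algebra_simps)
    finally show ?thesis .
  qed (simp add: Bn_def)
  have "Vv G s u w N v = (\<Sum>i<N. \<Sum>j<N. edg G N v i j / cardf G N v * (u * s (v j) - w * s (v i)))"
    unfolding Vv_def av_def by (intro sum.cong refl) auto
  also have "\<dots> = (\<Sum>i<N. \<Sum>j<N. u * (edg G N v i j * s (v j) / cardf G N v) - w * (edg G N v i j * s (v i) / cardf G N v))"
    by (intro sum.cong refl) (simp add: diff_divide_distrib right_diff_distrib mult.left_commute)
  also have "\<dots> = u * An G s N v - w * Bn G s N v"
    unfolding An Bn
    by (simp only: sum_subtractf sum_distrib_left[symmetric] sum_divide_distrib[symmetric])
  finally show ?thesis .
qed



lemma conv_comb:
  fixes A B :: "nat \<Rightarrow> 'a \<Rightarrow> real"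
  assumes ps: "\<And>N. prob_space (Ms N)"
    and AM: "\<And>N. A N \<in> borel_measurable (Ms N)" and BM: "\<And>N. B N \<in> borel_measurable (Ms N)"
    and cA: "conv_in_prob Ms A a" and cB: "conv_in_prob Ms B b"
    and u: "u \<longlonglongrightarrow> u0" and w: "w \<longlonglongrightarrow> w0"
  shows "conv_in_prob Ms (\<lambda>N x. u N * A N x - w N * B N x) (u0 * a - w0 * b)"
  unfolding conv_in_prob_def
proof (intro allI impI)
  fix e :: real assume e: "e > 0"
  define U where "U = \<bar>u0\<bar> + 1"
  define W where "W = \<bar>w0\<bar> + 1"
  have U: "U > 0" "W > 0" by (auto simp: U_def W_def)
  have evU: "eventually (\<lambda>N. \<bar>u N\<bar> \<le> U) sequentially"
  proof -
    have "eventually (\<lambda>N. dist (u N) u0 < 1) sequentially" using u by (rule tendstoD) simp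
    then show ?thesis by eventually_elim (auto simp: U_def dist_real_def)
  qed
  have evW: "eventually (\<lambda>N. \<bar>w N\<bar> \<le> W) sequentially"
  proof -
    have "eventually (\<lambda>N. dist (w N) w0 < 1) sequentially" using w by (rule tendstoD) simp
    then show ?thesis by eventually_elim (auto simp: W_def dist_real_def)
  qed
  have dlim: "(\<lambda>N. \<bar>u N - u0\<bar> * \<bar>a\<bar> + \<bar>w N - w0\<bar> * \<bar>b\<bar>) \<longlonglongrightarrow> 0"
  proof -
    have "(\<lambda>N. \<bar>u N - u0\<bar> * \<bar>a\<bar> + \<bar>w N - w0\<bar> * \<bar>b\<bar>) \<longlonglongrightarrow> \<bar>u0 - u0\<bar> * \<bar>a\<bar> + \<bar>w0 - w0\<bar> * \<bar>b\<bar>"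
      by (intro tendsto_intros u w)
    then show ?thesis by simp
  qed
  have evD: "eventually (\<lambda>N. \<bar>u N - u0\<bar> * \<bar>a\<bar> + \<bar>w N - w0\<bar> * \<bar>b\<bar> < e / 2) sequentially"
  proof -
    have "eventually (\<lambda>N. dist (\<bar>u N - u0\<bar> * \<bar>a\<bar> + \<bar>w N - w0\<bar> * \<bar>b\<bar>) 0 < e / 2) sequentially"
      using dlim e by (intro tendstoD) auto
    then show ?thesis by eventually_elim (auto simp: dist_real_def)
  qed
  define SA where "SA N = {x \<in> space (Ms N). e / (4 * U) < \<bar>A N x - a\<bar>}" for N
  define SB where "SB N = {x \<in> space (Ms N). e / (4 * W) < \<bar>B N x - b\<bar>}" for N
  define S where "S N = {x \<in> space (Ms N). e < \<bar>u N * A N x - w N * B N x - (u0 * a - w0 * b)\<bar>}" for N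
  have mSA: "(\<lambda>N. measure (Ms N) (SA N)) \<longlonglongrightarrow> 0"
  proof -
    have "e / (4 * U) > 0" using U e by simp
    then show ?thesis using cA unfolding conv_in_prob_def SA_def by blast
  qed
  have mSB: "(\<lambda>N. measure (Ms N) (SB N)) \<longlonglongrightarrow> 0"
  proof -
    have "e / (4 * W) > 0" using U e by simp
    then show ?thesis using cB unfolding conv_in_prob_def SB_def by blast
  qed
  have sum0: "(\<lambda>N. measure (Ms N) (SA N) + measure (Ms N) (SB N)) \<longlonglongrightarrow> 0"
    using tendsto_add[OF mSA mSB] by simp
  have ev: "eventually (\<lambda>N. measure (Ms N) (S N) \<le> measure (Ms N) (SA N) + measure (Ms N) (SB N)) sequentially"
    using evU evW evD
  proof eventually_elim
    case (elim N)
    interpret prob_space "Ms N" by (rule ps)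
    have sub: "S N \<subseteq> SA N \<union> SB N"
    proof
      fix x assume x: "x \<in> S N"
      show "x \<in> SA N \<union> SB N"
      proof (rule ccontr)
        assume "x \<notin> SA N \<union> SB N"
        then have a1: "\<bar>A N x - a\<bar> \<le> e / (4 * U)" and b1: "\<bar>B N x - b\<bar> \<le> e / (4 * W)"
          using x by (auto simp: SA_def SB_def S_def)
        have "\<bar>u N * A N x - w N * B N x - (u0 * a - w0 * b)\<bar>
            = \<bar>u N * (A N x - a) + (u N - u0) * a - (w N * (B N x - b) + (w N - w0) * b)\<bar>"
          by (simp add: algebra_simps)
        also have "\<dots> \<le> \<bar>u N\<bar> * \<bar>A N x - a\<bar> + \<bar>u N - u0\<bar> * \<bar>a\<bar> + (\<bar>w N\<bar> * \<bar>B N x - b\<bar> + \<bar>w N - w0\<bar> * \<bar>b\<bar>)"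
          by (simp add: abs_mult[symmetric] abs_triangle_ineq4 order_trans[OF abs_triangle_ineq4] abs_triangle_ineq)
        also have "\<dots> < e / 4 + e / 4 + e / 2"
        proof -
          have k1: "\<bar>u N\<bar> * \<bar>A N x - a\<bar> \<le> U * (e / (4 * U))"
            using elim a1 by (intro mult_mono) auto
          have k2: "\<bar>w N\<bar> * \<bar>B N x - b\<bar> \<le> W * (e / (4 * W))"
            using elim b1 by (intro mult_mono) auto
          have "U * (e / (4 * U)) = e / 4" "W * (e / (4 * W)) = e / 4" using U by auto
          then show ?thesis using k1 k2 elim by linarith
        qed
        finally show False using x by (simp add: S_def)
      qed
    qed
    have mA: "SA N \<in> events" unfolding SA_def using AM[of N] by measurable
    have mB: "SB N \<in> events" unfolding SB_def using BM[of N] by measurable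
    have "measure (Ms N) (S N) \<le> measure (Ms N) (SA N \<union> SB N)"
      using sub mA mB by (intro finite_measure_mono) auto
    also have "\<dots> \<le> measure (Ms N) (SA N) + measure (Ms N) (SB N)"
      using mA mB by (rule measure_Un_le)
    finally show ?case .
  qed
  show "(\<lambda>N. measure (Ms N) {x \<in> space (Ms N). e < \<bar>u N * A N x - w N * B N x - (u0 * a - w0 * b)\<bar>}) \<longlonglongrightarrow> 0"
    unfolding S_def[symmetric]
    by (rule tendsto_sandwich[OF _ ev tendsto_const sum0]) simp
qed



locale bt =
  fixes f :: "'k::euclidean_space \<Rightarrow> 'd::euclidean_space \<Rightarrow> real"
    and \<theta>1 :: 'k and gradf :: "'d \<Rightarrow> 'k" and h :: 'k
    and G :: "'d set \<Rightarrow> ('d \<times> 'd) set"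
    and M :: "'w measure" and Z :: "nat \<Rightarrow> 'w \<Rightarrow> 'd"
    and c :: "nat \<Rightarrow> nat \<Rightarrow> 'w \<Rightarrow> bool" and N1 :: "nat \<Rightarrow> nat" and p :: real
    and P :: "'d measure" and \<eta> :: "'d \<Rightarrow> 'k" and F :: "'w measure"
  assumes P_def: "P = density lborel (\<lambda>z. ennreal (f \<theta>1 z))"
    and \<eta>_def: "\<eta> = score f \<theta>1 gradf"
    and F_def: "F = vimage_algebra (space M) (\<lambda>\<omega> i. Z i \<omega>) (PiM UNIV (\<lambda>_. borel :: 'd measure))"
    and f1_meas: "f \<theta>1 \<in> borel_measurable lborel"
    and f1_nonneg: "\<And>z. 0 \<le> f \<theta>1 z"
    and f1_int: "(\<integral>\<^sup>+ z. ennreal (f \<theta>1 z) \<partial>lborel) = 1"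
    and grad_meas: "gradf \<in> borel_measurable lborel"
    and R_moment: "(\<integral>\<^sup>+ z. ennreal (\<bar>h \<bullet> \<eta> z\<bar> ^ 4) \<partial>P) < \<infinity>"
    and G_graph: "dir_graph_functional G"
    and G_meas: "graph_measurable G"
    and C: "cond_C G P (\<lambda>z. h \<bullet> \<eta> z) (\<lambda>z. h \<bullet> gradf z)"
    and M_prob: "prob_space M"
    and Z_distr: "\<And>i. distributed M lborel (Z i) (\<lambda>z. ennreal (f \<theta>1 z))"
    and Z_indep: "prob_space.indep_vars M (\<lambda>_. borel) Z UNIV"
    and c_indep: "\<And>N. prob_space.indep_vars M (\<lambda>_. count_space UNIV) (c N) {..<N}"
    and c_prob: "\<And>N i. i < N \<Longrightarrow> measure M {\<omega> \<in> space M. c N i \<omega>} = real (N1 N) / real N"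
    and c_Z_indep: "\<And>N. prob_space.indep_set M (sets F)
                       {(\<lambda>\<omega>. restrict (\<lambda>i. c N i \<omega>) {..<N}) -` A \<inter> space M | A.
                          A \<in> sets (PiM {..<N} (\<lambda>_. count_space UNIV))}"
    and N1_le: "\<And>N. N1 N \<le> N"
    and N1_lim: "(\<lambda>N. real (N1 N) / real N) \<longlonglongrightarrow> p"
begin

sublocale prob_space M by (rule M_prob)

definition s :: "'d \<Rightarrow> real" where "s z = h \<bullet> \<eta> z"

lemma s_meas: "s \<in> borel_measurable borel"
proof -
  have "f \<theta>1 \<in> borel_measurable borel" using f1_meas by simp
  moreover have "gradf \<in> borel_measurable borel" using grad_meas by simp
  ultimately show ?thesis unfolding s_def[abs_def] unfolding \<eta>_def score_def by measurable
qed

lemma Z_meas [measurable]: "Z i \<in> borel_measurable M"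
  using Z_distr[of i] unfolding distributed_def by simp

lemma distr_Z: "distr M borel (Z i) = P"
proof -
  have "distr M lborel (Z i) = P" using Z_distr[of i] unfolding distributed_def P_def by simp
  moreover have "distr M borel (Z i) = distr M lborel (Z i)"
    by (rule distr_cong) auto
  ultimately show ?thesis by simp
qed

lemma P_prob: "prob_space P"
proof
  show "emeasure P (space P) = 1"
    using f1_int f1_meas unfolding P_def by (simp add: emeasure_density)
qed

lemma sets_P: "sets P = sets borel" unfolding P_def by simp

lemma s_measP: "s \<in> borel_measurable P"
  using s_meas by (simp add: measurable_cong_sets[OF sets_P refl])

lemma s_intP: "integrable P s"
proof (rule integrableI_bounded)
  show "s \<in> borel_measurable P" by (rule s_measP)
  have le: "ennreal (norm (s x)) \<le> 1 + ennreal (\<bar>s x\<bar> ^ 4)" for x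
  proof -
    have "\<bar>s x\<bar> \<le> 1 + \<bar>s x\<bar> ^ 4"
    proof (cases "\<bar>s x\<bar> \<le> 1")
      case False
      then have "\<bar>s x\<bar> ^ 1 \<le> \<bar>s x\<bar> ^ 4" by (intro power_increasing) auto
      then show ?thesis by simp
    next
      case True
      have "0 \<le> \<bar>s x\<bar> ^ 4" by simp
      then show ?thesis using True by linarith
    qed
    then have "ennreal \<bar>s x\<bar> \<le> ennreal (1 + \<bar>s x\<bar> ^ 4)" by (rule ennreal_leI)
    also have "\<dots> = 1 + ennreal (\<bar>s x\<bar> ^ 4)" by (subst ennreal_plus) auto
    finally show ?thesis by simp
  qed
  have "(\<integral>\<^sup>+ x. ennreal (norm (s x)) \<partial>P) \<le> (\<integral>\<^sup>+ x. 1 + ennreal (\<bar>s x\<bar> ^ 4) \<partial>P)"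
    by (intro nn_integral_mono le)
  also have "\<dots> = (\<integral>\<^sup>+ x. 1 \<partial>P) + (\<integral>\<^sup>+ x. ennreal (\<bar>s x\<bar> ^ 4) \<partial>P)"
    using s_measP by (intro nn_integral_add) auto
  also have "\<dots> < \<infinity>"
  proof -
    interpret Pp: prob_space P by (rule P_prob)
    have "(\<integral>\<^sup>+ x. ennreal (\<bar>s x\<bar> ^ 4) \<partial>P) < \<infinity>" using R_moment by (simp add: s_def)
    then show ?thesis by (simp add: Pp.emeasure_space_1)
  qed
  finally show "(\<integral>\<^sup>+ x. ennreal (norm (s x)) \<partial>P) < \<infinity>" .
qed

lemma sZ_int: "integrable M (\<lambda>\<omega>. s (Z i \<omega>))"
proof -
  have "integrable (distr M borel (Z i)) s" using s_intP distr_Z by simp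
  then show ?thesis using s_meas by (subst (asm) integrable_distr_eq) auto
qed

lemma F_Z_meas: "(\<lambda>\<omega> i. Z i \<omega>) \<in> measurable F (PiM UNIV (\<lambda>_. borel :: 'd measure))"
  unfolding F_def by (rule measurable_vimage_algebra1) (simp add: space_PiM)

lemma subalg: "subalgebra M F"
proof -
  have meas: "(\<lambda>\<omega> i. Z i \<omega>) \<in> measurable M (PiM UNIV (\<lambda>_. borel :: 'd measure))"
    by (intro measurable_PiM_single') auto
  show ?thesis unfolding subalgebra_def F_def
    using meas by (subst sets_vimage_algebra2) (auto simp: space_PiM intro: measurable_sets)
qed

lemma Z_measF [measurable]: "Z i \<in> borel_measurable F"
  using measurable_compose[OF F_Z_meas measurable_component_singleton[of i UNIV]] by simp

definition rZ :: "nat \<Rightarrow> 'w \<Rightarrow> nat \<Rightarrow> 'd" where "rZ N \<omega> = restrict (\<lambda>i. Z i \<omega>) {..<N}"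

lemma rZ_measF: "rZ N \<in> measurable F (PB N)"
  unfolding rZ_def using measurable_compose[OF F_Z_meas measurable_restrict_subset[of "{..<N}" UNIV]] by simp

lemma rZ_meas: "rZ N \<in> measurable M (PB N)"
  using rZ_measF measurable_from_subalg[OF subalg] by blast

definition rc :: "nat \<Rightarrow> 'w \<Rightarrow> nat \<Rightarrow> bool" where "rc N \<omega> = restrict (\<lambda>i. c N i \<omega>) {..<N}"

definition Cev :: "nat \<Rightarrow> 'w set set" where
  "Cev N = {rc N -` A \<inter> space M | A. A \<in> sets (PiM {..<N} (\<lambda>_. count_space UNIV))}"

lemma Cev_ind: "A \<in> sets F \<Longrightarrow> E \<in> Cev N \<Longrightarrow> prob (A \<inter> E) = prob A * prob E"
  using indep_setD[OF c_Z_indep[of N]] unfolding Cev_def rc_def by blast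

lemma Cev_events: "Cev N \<subseteq> events"
  using indep_setD_ev2[OF c_Z_indep[of N]] unfolding Cev_def rc_def by blast

lemma c_meas: "i < N \<Longrightarrow> c N i \<in> measurable M (count_space UNIV)"
  using c_indep[of N] unfolding indep_vars_def by auto

lemma Cev_pred:
  assumes "Measurable.pred (PiM {..<N} (\<lambda>_. count_space UNIV)) Q"
  shows "{\<omega> \<in> space M. Q (rc N \<omega>)} \<in> Cev N"
proof -
  have "rc N \<omega> \<in> space (PiM {..<N} (\<lambda>_. count_space (UNIV::bool set)))" for \<omega>
    by (auto simp: rc_def space_PiM)
  then have "{\<omega> \<in> space M. Q (rc N \<omega>)} = rc N -` {v \<in> space (PiM {..<N} (\<lambda>_. count_space UNIV)). Q v} \<inter> space M"
    by auto
  moreover have "{v \<in> space (PiM {..<N} (\<lambda>_. count_space UNIV)). Q v} \<in> sets (PiM {..<N} (\<lambda>_. count_space UNIV))"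
    using assms by (simp add: pred_def)
  ultimately show ?thesis unfolding Cev_def by blast
qed

lemma pred_comp:
  assumes "i < N"
  shows "Measurable.pred (PiM {..<N} (\<lambda>_. count_space UNIV)) (\<lambda>v. v i = (b::bool))"
proof -
  have "(\<lambda>v. v i) \<in> measurable (PiM {..<N} (\<lambda>_. count_space UNIV)) (count_space (UNIV::bool set))"
    using assms by (intro measurable_component_singleton) auto
  from measurable_sets[OF this, of "{b}"]
  have "(\<lambda>v. v i) -` {b} \<inter> space (PiM {..<N} (\<lambda>_. count_space UNIV)) \<in> sets (PiM {..<N} (\<lambda>_. count_space UNIV))"
    by simp
  moreover have "(\<lambda>v. v i) -` {b} \<inter> space (PiM {..<N} (\<lambda>_. count_space UNIV)) = {v \<in> space (PiM {..<N} (\<lambda>_. count_space UNIV)). v i = b}"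
    by auto
  ultimately show ?thesis by (simp add: pred_def)
qed

lemma rc_app: "i < N \<Longrightarrow> rc N \<omega> i = c N i \<omega>" by (simp add: rc_def)

lemma cprob_prod:
  assumes J: "J \<subseteq> {..<N}" "J \<noteq> {}"
  shows "prob {\<omega> \<in> space M. \<forall>l\<in>J. c N l \<omega> = b l} = (\<Prod>l\<in>J. prob {\<omega> \<in> space M. c N l \<omega> = b l})"
proof -
  have fin: "finite J" using J finite_subset by auto
  have "prob (\<Inter>l\<in>J. c N l -` {b l} \<inter> space M) = (\<Prod>l\<in>J. prob (c N l -` {b l} \<inter> space M))"
    by (rule indep_varsD[OF c_indep[of N]]) (use J fin in auto)
  moreover have "(\<Inter>l\<in>J. c N l -` {b l} \<inter> space M) = {\<omega> \<in> space M. \<forall>l\<in>J. c N l \<omega> = b l}"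
    using J by auto
  moreover have "c N l -` {b l} \<inter> space M = {\<omega> \<in> space M. c N l \<omega> = b l}" for l by auto
  ultimately show ?thesis by simp
qed

definition \<pi> :: "nat \<Rightarrow> real" where "\<pi> N = real (N1 N) / real N"

lemma cprob1: "l < N \<Longrightarrow> prob {\<omega> \<in> space M. c N l \<omega> = True} = \<pi> N"
  using c_prob[of l N] by (simp add: \<pi>_def)

lemma cprob0: "l < N \<Longrightarrow> prob {\<omega> \<in> space M. c N l \<omega> = False} = 1 - \<pi> N"
proof -
  assume l: "l < N"
  have ev: "{\<omega> \<in> space M. c N l \<omega>} \<in> events" using c_meas[OF l] by measurable
  have "{\<omega> \<in> space M. c N l \<omega> = False} = space M - {\<omega> \<in> space M. c N l \<omega>}" by auto
  then show ?thesis using prob_compl[OF ev] cprob1[OF l] by simp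
qed

lemma cprob_b: "l < N \<Longrightarrow> prob {\<omega> \<in> space M. c N l \<omega> = b} = (if b then \<pi> N else 1 - \<pi> N)"
  using cprob1 cprob0 by (cases b) auto

lemma av_meas: "(\<lambda>v. av G N v i j) \<in> borel_measurable (PB N)"
proof (cases "i < N \<and> j < N")
  case True
  then show ?thesis unfolding av_def
    by (simp, intro borel_measurable_divide edg_meas cardf_meas G_meas) auto
next
  case False
  then have "(\<lambda>v. av G N v i j) = (\<lambda>v. 0)" by (auto simp: av_def)
  then show ?thesis by simp
qed

lemma cardf_eq: "cardf G N v = real (card (G (v ` {..<N})))"
  unfolding cardf_def using card_G_formula[OF G_graph] by simp

lemma av_bound: "\<bar>av G N v i j\<bar> \<le> 1"
proof (cases "i < N \<and> j < N \<and> (v i, v j) \<in> G (v ` {..<N})")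
  case True
  have fin: "finite (G (v ` {..<N}))"
    using G_graph unfolding dir_graph_functional_def by (meson finite_SigmaI finite_imageI finite_lessThan finite_subset)
  then have "card (G (v ` {..<N})) \<ge> 1" using True by (metis One_nat_def Suc_leI card_gt_0_iff empty_iff)
  then show ?thesis using True by (simp add: av_def edg_def cardf_eq)
qed (auto simp: av_def edg_def)

lemma av_diag: "av G N v i i = 0"
  using G_graph unfolding av_def edg_def dir_graph_functional_def by auto

lemma rZ_image: "rZ N \<omega> ` {..<N} = (\<lambda>k. Z k \<omega>) ` {..<N}"
  unfolding rZ_def by auto

lemma rZ_app: "i < N \<Longrightarrow> rZ N \<omega> i = Z i \<omega>" by (simp add: rZ_def)

definition Bw :: "nat \<Rightarrow> nat \<Rightarrow> nat \<Rightarrow> 'w set" where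
  "Bw N i j = {\<omega> \<in> space M. c N i \<omega> \<and> \<not> c N j \<omega>}"
definition Cw :: "nat \<Rightarrow> nat \<Rightarrow> 'w set" where
  "Cw N k = {\<omega> \<in> space M. \<not> c N k \<omega>}"

lemma boot_T_eq:
  assumes \<omega>: "\<omega> \<in> space M"
  shows "boot_T G Z c N \<omega> = (\<Sum>i<N. \<Sum>j<N. av G N (rZ N \<omega>) i j * indicator (Bw N i j) \<omega>)"
proof -
  have "boot_T G Z c N \<omega> = (\<Sum>i<N. \<Sum>j<N. (if i \<noteq> j \<and> c N i \<omega> \<and> \<not> c N j \<omega> \<and>
          (Z i \<omega>, Z j \<omega>) \<in> G ((\<lambda>k. Z k \<omega>) ` {..<N}) then 1 else 0) / real (card (G ((\<lambda>k. Z k \<omega>) ` {..<N}))))"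
    unfolding boot_T_def by (simp add: sum_divide_distrib)
  also have "\<dots> = (\<Sum>i<N. \<Sum>j<N. av G N (rZ N \<omega>) i j * indicator (Bw N i j) \<omega>)"
  proof (intro sum.cong refl)
    fix i j assume i: "i \<in> {..<N}" and j: "j \<in> {..<N}"
    have loop: "(Z i \<omega>, Z i \<omega>) \<notin> G ((\<lambda>k. Z k \<omega>) ` {..<N})" using G_graph unfolding dir_graph_functional_def by auto
    show "(if i \<noteq> j \<and> c N i \<omega> \<and> \<not> c N j \<omega> \<and>
          (Z i \<omega>, Z j \<omega>) \<in> G ((\<lambda>k. Z k \<omega>) ` {..<N}) then 1 else 0) / real (card (G ((\<lambda>k. Z k \<omega>) ` {..<N})))
        = av G N (rZ N \<omega>) i j * indicator (Bw N i j) \<omega>"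
      using i j \<omega> loop unfolding av_def edg_def cardf_eq rZ_image Bw_def
      by (auto simp: rZ_app indicator_def)
  qed
  finally show ?thesis .
qed

lemma boot_L_eq:
  assumes \<omega>: "\<omega> \<in> space M"
  shows "boot_L (\<lambda>z. h \<bullet> \<eta> z) Z c N \<omega> = (1 / sqrt N) * (\<Sum>k<N. s (Z k \<omega>) * indicator (Cw N k) \<omega>)"
  unfolding boot_L_def s_def Cw_def using \<omega>
  by (intro arg_cong2[where f="(*)"] refl sum.cong) (auto simp: indicator_def)

lemma avZ_measF: "(\<lambda>\<omega>. av G N (rZ N \<omega>) i j) \<in> borel_measurable F"
  using measurable_compose[OF rZ_measF av_meas] .

lemma avZ_meas: "(\<lambda>\<omega>. av G N (rZ N \<omega>) i j) \<in> borel_measurable M"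
  using avZ_measF measurable_from_subalg[OF subalg] by blast

lemma Bw_ev: "i < N \<Longrightarrow> j < N \<Longrightarrow> Bw N i j \<in> events"
  unfolding Bw_def using c_meas[of i N] c_meas[of j N] by measurable

lemma Cw_ev: "k < N \<Longrightarrow> Cw N k \<in> events"
  unfolding Cw_def using c_meas[of k N] by measurable

lemma boot_R_meas: "boot_R G Z c N1 N \<in> borel_measurable M"
proof -
  have "(\<lambda>\<omega>. sqrt N * ((\<Sum>i<N. \<Sum>j<N. av G N (rZ N \<omega>) i j * indicator (Bw N i j) \<omega>)
      - real (N1 N) * real (N - N1 N) / (real N * (real N - 1)))) \<in> borel_measurable M"
    using avZ_meas Bw_ev by (intro borel_measurable_times borel_measurable_const borel_measurable_diff
        borel_measurable_sum borel_measurable_indicator) auto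
  then show ?thesis
    by (rule measurable_cong[THEN iffD1, rotated]) (simp add: boot_R_def boot_T_eq)
qed

lemma boot_L_meas: "boot_L (\<lambda>z. h \<bullet> \<eta> z) Z c N \<in> borel_measurable M"
proof -
  have "(\<lambda>\<omega>. (1 / sqrt N) * (\<Sum>k<N. s (Z k \<omega>) * indicator (Cw N k) \<omega>)) \<in> borel_measurable M"
    using Cw_ev s_meas by (intro borel_measurable_times borel_measurable_const
        borel_measurable_sum borel_measurable_indicator measurable_compose[OF Z_meas s_meas]) auto
  then show ?thesis
    by (rule measurable_cong[THEN iffD1, rotated]) (simp add: boot_L_eq)
qed

lemma Bw_Cev: "i < N \<Longrightarrow> j < N \<Longrightarrow> Bw N i j \<in> Cev N"
proof -
  assume ij: "i < N" "j < N"
  have "Bw N i j = {\<omega> \<in> space M. (\<lambda>v. v i = True \<and> v j = False) (rc N \<omega>)}"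
    using ij by (auto simp: Bw_def rc_app)
  also have "\<dots> \<in> Cev N" using ij by (intro Cev_pred pred_intros_logic pred_comp)
  finally show ?thesis .
qed

lemma Cw_Cev: "k < N \<Longrightarrow> Cw N k \<in> Cev N"
proof -
  assume k: "k < N"
  have "Cw N k = {\<omega> \<in> space M. (\<lambda>v. v k = False) (rc N \<omega>)}"
    using k by (auto simp: Cw_def rc_app)
  also have "\<dots> \<in> Cev N" using k by (intro Cev_pred pred_comp)
  finally show ?thesis .
qed

lemma BC_Cev: "i < N \<Longrightarrow> j < N \<Longrightarrow> k < N \<Longrightarrow> Bw N i j \<inter> Cw N k \<in> Cev N"
proof -
  assume ijk: "i < N" "j < N" "k < N"
  have "Bw N i j \<inter> Cw N k = {\<omega> \<in> space M. (\<lambda>v. v i = True \<and> v j = False \<and> v k = False) (rc N \<omega>)}"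
    using ijk by (auto simp: Bw_def Cw_def rc_app)
  also have "\<dots> \<in> Cev N" using ijk by (intro Cev_pred pred_intros_logic pred_comp)
  finally show ?thesis .
qed

lemma prob_Cw: "k < N \<Longrightarrow> prob (Cw N k) = 1 - \<pi> N"
  using cprob0[of k N] unfolding Cw_def by simp

lemma prob_Bw: "i < N \<Longrightarrow> j < N \<Longrightarrow> i \<noteq> j \<Longrightarrow> prob (Bw N i j) = \<pi> N * (1 - \<pi> N)"
proof -
  assume ij: "i < N" "j < N" "i \<noteq> j"
  have "Bw N i j = {\<omega> \<in> space M. \<forall>l\<in>{i, j}. c N l \<omega> = (l = i)}"
    using ij by (auto simp: Bw_def)
  also have "prob \<dots> = (\<Prod>l\<in>{i, j}. prob {\<omega> \<in> space M. c N l \<omega> = (l = i)})"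
    using ij by (intro cprob_prod) auto
  also have "\<dots> = \<pi> N * (1 - \<pi> N)"
    using ij cprob1[of i N] cprob0[of j N] by simp
  finally show ?thesis .
qed

lemma prob_BC: "i < N \<Longrightarrow> j < N \<Longrightarrow> k < N \<Longrightarrow> i \<noteq> j \<Longrightarrow>
   prob (Bw N i j \<inter> Cw N k) = (if k = i then 0 else if k = j then \<pi> N * (1 - \<pi> N) else \<pi> N * (1 - \<pi> N) * (1 - \<pi> N))"
proof -
  assume ijk: "i < N" "j < N" "k < N" "i \<noteq> j"
  show ?thesis
  proof (cases "k = i")
    case True
    then have "Bw N i j \<inter> Cw N k = {}" by (auto simp: Bw_def Cw_def)
    then show ?thesis using True by simp
  next
    case ki: False
    show ?thesis
    proof (cases "k = j")
      case True
      then have "Bw N i j \<inter> Cw N k = Bw N i j" by (auto simp: Bw_def Cw_def)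
      then show ?thesis using True ki ijk prob_Bw by simp
    next
      case False
      have "Bw N i j \<inter> Cw N k = {\<omega> \<in> space M. \<forall>l\<in>{i, j, k}. c N l \<omega> = (l = i)}"
        using ijk ki False by (auto simp: Bw_def Cw_def)
      also have "prob \<dots> = (\<Prod>l\<in>{i, j, k}. prob {\<omega> \<in> space M. c N l \<omega> = (l = i)})"
        using ijk by (intro cprob_prod) auto
      also have "\<dots> = \<pi> N * (1 - \<pi> N) * (1 - \<pi> N)"
        using ijk ki False cprob1[of i N] cprob0[of j N] cprob0[of k N] by simp
      finally show ?thesis using ki False by simp
    qed
  qed
qed

lemma cov_eq:
  "AE \<omega> in M. cond_cov M F (boot_R G Z c N1 N) (boot_L (\<lambda>z. h \<bullet> \<eta> z) Z c N) \<omega>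
     = Vv G s (\<pi> N * (1 - \<pi> N) * (1 - (1 - \<pi> N))) (\<pi> N * (1 - \<pi> N) * (1 - \<pi> N)) N (rZ N \<omega>)"
proof -
  have "AE \<omega> in M. cond_cov M F (boot_R G Z c N1 N) (boot_L (\<lambda>z. h \<bullet> \<eta> z) Z c N) \<omega>
     = (\<Sum>i<N. \<Sum>j<N. av G N (rZ N \<omega>) i j * (\<pi> N * (1 - \<pi> N) * (1 - (1 - \<pi> N)) * s (Z j \<omega>)
           - \<pi> N * (1 - \<pi> N) * (1 - \<pi> N) * s (Z i \<omega>)))"
  proof (rule cond_cov_abstract[OF subalg Cev_events[of N] Cev_ind[of _ _ N]])
    show "AE \<omega> in M. boot_R G Z c N1 N \<omega> = sqrt N * ((\<Sum>i<N. \<Sum>j<N. av G N (rZ N \<omega>) i j * indicator (Bw N i j) \<omega>)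
          - real (N1 N) * real (N - N1 N) / (real N * (real N - 1)))"
      by (rule AE_I2) (simp add: boot_R_def boot_T_eq)
    show "AE \<omega> in M. boot_L (\<lambda>z. h \<bullet> \<eta> z) Z c N \<omega> = (1 / sqrt N) * (\<Sum>k<N. s (Z k \<omega>) * indicator (Cw N k) \<omega>)"
      by (rule AE_I2) (simp add: boot_L_eq)
  qed (auto simp: avZ_measF av_bound av_diag sZ_int Bw_Cev Cw_Cev BC_Cev prob_Bw prob_Cw prob_BC
        boot_R_meas boot_L_meas measurable_compose[OF Z_measF s_meas])
  then show ?thesis
    by eventually_elim (auto simp: Vv_def rZ_app intro!: sum.cong)
qed

lemma P_single: "emeasure P {x} = 0"
proof -
  have "emeasure P {x} = (\<integral>\<^sup>+ z. ennreal (f \<theta>1 z) * indicator {x} z \<partial>lborel)"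
    unfolding P_def using f1_meas by (intro emeasure_density) auto
  also have "\<dots> = 0" by (rule nn_integral_null_set) (simp add: null_sets_def)
  finally show ?thesis .
qed

lemma Z_indep_pair:
  assumes "i \<noteq> j"
  shows "indep_var borel (Z i) borel (Z j)"
proof -
  have "indep_var (PiM {i} (\<lambda>_. borel)) (\<lambda>\<omega>. restrict (\<lambda>k. Z k \<omega>) {i}) (PiM {j} (\<lambda>_. borel)) (\<lambda>\<omega>. restrict (\<lambda>k. Z k \<omega>) {j})"
    using assms by (intro indep_var_restrict[OF Z_indep]) auto
  then have "indep_var borel ((\<lambda>v. v i) \<circ> (\<lambda>\<omega>. restrict (\<lambda>k. Z k \<omega>) {i})) borel ((\<lambda>v. v j) \<circ> (\<lambda>\<omega>. restrict (\<lambda>k. Z k \<omega>) {j}))"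
    by (rule indep_var_compose) auto
  then show ?thesis by (simp add: comp_def)
qed

lemma Z_diag_null:
  assumes ij: "i \<noteq> j"
  shows "{\<omega> \<in> space M. Z i \<omega> = Z j \<omega>} \<in> null_sets M"
proof -
  interpret Pp: prob_space P by (rule P_prob)
  have eq: "P \<Otimes>\<^sub>M P = distr M (borel \<Otimes>\<^sub>M borel) (\<lambda>\<omega>. (Z i \<omega>, Z j \<omega>))"
    using Z_indep_pair[OF ij] unfolding indep_var_distribution_eq by (simp add: distr_Z)
  define D where "D = {x \<in> space (borel \<Otimes>\<^sub>M borel :: ('d \<times> 'd) measure). fst x = snd x}"
  have Dm: "D \<in> sets (borel \<Otimes>\<^sub>M borel)" unfolding D_def by measurable
  have DmP: "D \<in> sets (P \<Otimes>\<^sub>M P)" using Dm by (simp add: sets_pair_measure_cong[OF sets_P sets_P])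
  have "emeasure M {\<omega> \<in> space M. Z i \<omega> = Z j \<omega>} = emeasure (distr M (borel \<Otimes>\<^sub>M borel) (\<lambda>\<omega>. (Z i \<omega>, Z j \<omega>))) D"
  proof -
    have "(\<lambda>\<omega>. (Z i \<omega>, Z j \<omega>)) -` D \<inter> space M = {\<omega> \<in> space M. Z i \<omega> = Z j \<omega>}"
      by (auto simp: D_def space_pair_measure)
    then show ?thesis using Dm by (subst emeasure_distr) auto
  qed
  also have "\<dots> = emeasure (P \<Otimes>\<^sub>M P) D" by (simp add: eq)
  also have "\<dots> = (\<integral>\<^sup>+ x. emeasure P (Pair x -` D) \<partial>P)"
    by (rule Pp.emeasure_pair_measure_alt[OF DmP])
  also have "\<dots> = (\<integral>\<^sup>+ x. 0 \<partial>P)"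
  proof (rule nn_integral_cong)
    fix x have "Pair x -` D = {x}" by (auto simp: D_def space_pair_measure)
    then show "emeasure P (Pair x -` D) = 0" by (simp add: P_single)
  qed
  finally have "emeasure M {\<omega> \<in> space M. Z i \<omega> = Z j \<omega>} = 0" by simp
  moreover have "{\<omega> \<in> space M. Z i \<omega> = Z j \<omega>} \<in> events" by measurable
  ultimately show ?thesis by (simp add: null_sets_def)
qed

lemma AE_inj: "AE \<omega> in M. inj_on (rZ N \<omega>) {..<N}"
proof -
  have "AE \<omega> in M. \<forall>i\<in>{..<N}. \<forall>j\<in>{..<N}. i \<noteq> j \<longrightarrow> Z i \<omega> \<noteq> Z j \<omega>"
  proof (intro AE_finite_allI finite_lessThan)
    fix i j assume "i \<in> {..<N}" "j \<in> {..<N}"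
    show "AE \<omega> in M. i \<noteq> j \<longrightarrow> Z i \<omega> \<noteq> Z j \<omega>"
    proof (cases "i = j")
      case False
      show ?thesis using AE_not_in[OF Z_diag_null[OF False]] AE_space by eventually_elim auto
    qed simp
  qed
  then show ?thesis by eventually_elim (auto simp: inj_on_def rZ_app)
qed

lemma distr_rZ: "N \<noteq> 0 \<Longrightarrow> distr M (PB N) (rZ N) = sample_law P N"
proof -
  assume N: "N \<noteq> 0"
  have "indep_vars (\<lambda>_. borel) Z {..<N}" by (rule indep_vars_subset[OF Z_indep]) auto
  then have "distr M (PiM {..<N} (\<lambda>_. borel)) (\<lambda>x. \<lambda>i\<in>{..<N}. Z i x) = PiM {..<N} (\<lambda>i. distr M borel (Z i))"
    using N by (subst (asm) indep_vars_iff_distr_eq_PiM') auto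
  then show ?thesis unfolding sample_law_def rZ_def by (simp add: distr_Z)
qed

lemma sets_sample: "sets (sample_law P N) = sets (PB N)"
  unfolding sample_law_def by (intro sets_PiM_cong) (auto simp: sets_P)

lemma space_sample: "space (sample_law P N) = space (PB N)"
  unfolding sample_law_def by (simp add: space_PiM sets_eq_imp_space_eq[OF sets_P])

lemma Vv_meas: "Vv G s u w N \<in> borel_measurable (PB N)"
proof -
  have "(\<lambda>v. \<Sum>i<N. \<Sum>j<N. av G N v i j * (u * s (v j) - w * s (v i))) \<in> borel_measurable (PB N)"
    by (intro borel_measurable_sum borel_measurable_times borel_measurable_diff borel_measurable_const av_meas
        measurable_compose[OF _ s_meas] measurable_component_singleton) auto
  then show ?thesis unfolding Vv_def[abs_def] .
qed

lemma sample_prob: "prob_space (sample_law P N)"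
  unfolding sample_law_def using P_prob by (intro prob_space_PiM) auto

lemma main:
  "conv_in_prob (\<lambda>_. M)
     (\<lambda>N. cond_cov M F (boot_R G Z c N1 N) (boot_L (\<lambda>z. h \<bullet> \<eta> z) Z c N))
     ((2 * p * (1 - p) / 2) * (p * (\<integral> z. (h \<bullet> gradf z) * lam_dn_lim G P z \<partial>lborel)
                     - (1 - p) * (\<integral> z. (h \<bullet> gradf z) * lam_up_lim G P z \<partial>lborel)))"
proof -
  define a where "a = (\<integral> z. (h \<bullet> gradf z) * lam_dn_lim G P z \<partial>lborel)"
  define b where "b = (\<integral> z. (h \<bullet> gradf z) * lam_up_lim G P z \<partial>lborel)"
  define u where "u N = \<pi> N * (1 - \<pi> N) * (1 - (1 - \<pi> N))" for N
  define w where "w N = \<pi> N * (1 - \<pi> N) * (1 - \<pi> N)" for N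
  define cs where "cs = (2 * p * (1 - p) / 2) * (p * a - (1 - p) * b)"
  have sfun: "s = (\<lambda>z. h \<bullet> \<eta> z)" by (simp add: s_def[abs_def])
  have cA: "conv_in_prob (sample_law P) (An G s) a"
    using C unfolding cond_C_def a_def An_def[abs_def] sfun by simp
  have cB: "conv_in_prob (sample_law P) (Bn G s) b"
    using C unfolding cond_C_def b_def Bn_def[abs_def] sfun by simp
  have pi_lim: "\<pi> \<longlonglongrightarrow> p" using N1_lim unfolding \<pi>_def[abs_def] .
  have u_lim: "u \<longlonglongrightarrow> p * (1 - p) * (1 - (1 - p))" unfolding u_def by (intro tendsto_intros pi_lim)
  have w_lim: "w \<longlonglongrightarrow> p * (1 - p) * (1 - p)" unfolding w_def by (intro tendsto_intros pi_lim)
  have measS: "A \<in> borel_measurable (PB N) \<Longrightarrow> A \<in> borel_measurable (sample_law P N)" for A N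
    by (simp add: measurable_cong_sets[OF sets_sample refl])
  have conv: "conv_in_prob (sample_law P) (\<lambda>N v. u N * An G s N v - w N * Bn G s N v)
       (p * (1 - p) * (1 - (1 - p)) * a - p * (1 - p) * (1 - p) * b)"
    by (rule conv_comb[OF sample_prob measS measS cA cB u_lim w_lim])
       (auto intro: An_meas Bn_meas G_graph G_meas s_meas)
  have cs_eq: "p * (1 - p) * (1 - (1 - p)) * a - p * (1 - p) * (1 - p) * b = cs"
    unfolding cs_def by (simp add: algebra_simps)
  show ?thesis
    unfolding a_def[symmetric] b_def[symmetric] cs_def[symmetric] conv_in_prob_def
  proof (intro allI impI)
    fix e :: real assume e: "e > 0"
    have lim: "(\<lambda>N. measure (sample_law P N) {v \<in> space (sample_law P N). e < \<bar>u N * An G s N v - w N * Bn G s N v - cs\<bar>}) \<longlonglongrightarrow> 0"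
      using conv e unfolding conv_in_prob_def cs_eq by blast
    have ev: "eventually (\<lambda>N. measure M {x \<in> space M. e < \<bar>cond_cov M F (boot_R G Z c N1 N) (boot_L (\<lambda>z. h \<bullet> \<eta> z) Z c N) x - cs\<bar>}
       = measure (sample_law P N) {v \<in> space (sample_law P N). e < \<bar>u N * An G s N v - w N * Bn G s N v - cs\<bar>}) sequentially"
      using eventually_gt_at_top[of 0]
    proof eventually_elim
      case (elim N)
      then have N: "N \<noteq> 0" by simp
      let ?W = "\<lambda>v. u N * An G s N v - w N * Bn G s N v"
      have WM: "?W \<in> borel_measurable (PB N)"
        by (intro borel_measurable_diff borel_measurable_times borel_measurable_const An_meas Bn_meas G_graph G_meas s_meas)
      have WMM: "(\<lambda>x. ?W (rZ N x)) \<in> borel_measurable M" using measurable_compose[OF rZ_meas WM] .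
      have VMM: "(\<lambda>x. Vv G s (u N) (w N) N (rZ N x)) \<in> borel_measurable M"
        using measurable_compose[OF rZ_meas Vv_meas] .
      have ccM: "cond_cov M F (boot_R G Z c N1 N) (boot_L (\<lambda>z. h \<bullet> \<eta> z) Z c N) \<in> borel_measurable M"
        unfolding cond_cov_def by simp
      have "measure M {x \<in> space M. e < \<bar>cond_cov M F (boot_R G Z c N1 N) (boot_L (\<lambda>z. h \<bullet> \<eta> z) Z c N) x - cs\<bar>}
          = measure M {x \<in> space M. e < \<bar>?W (rZ N x) - cs\<bar>}"
      proof (rule measure_eq_AE)
        show "AE x in M. (x \<in> {x \<in> space M. e < \<bar>cond_cov M F (boot_R G Z c N1 N) (boot_L (\<lambda>z. h \<bullet> \<eta> z) Z c N) x - cs\<bar>})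
            = (x \<in> {x \<in> space M. e < \<bar>?W (rZ N x) - cs\<bar>})"
          using cov_eq[of N] AE_inj[of N]
          by eventually_elim (simp add: Vv_inj[OF G_graph] u_def w_def)
      next
        show "{x \<in> space M. e < \<bar>cond_cov M F (boot_R G Z c N1 N) (boot_L (\<lambda>z. h \<bullet> \<eta> z) Z c N) x - cs\<bar>} \<in> events"
          using ccM by measurable
        show "{x \<in> space M. e < \<bar>?W (rZ N x) - cs\<bar>} \<in> events"
          using WMM by measurable
      qed
      also have "\<dots> = measure (distr M (PB N) (rZ N)) {v \<in> space (PB N). e < \<bar>?W v - cs\<bar>}"
      proof -
        have "rZ N -` {v \<in> space (PB N). e < \<bar>?W v - cs\<bar>} \<inter> space M = {x \<in> space M. e < \<bar>?W (rZ N x) - cs\<bar>}"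
          using measurable_space[OF rZ_meas] by auto
        moreover have "{v \<in> space (PB N). e < \<bar>?W v - cs\<bar>} \<in> sets (PB N)" using WM by measurable
        ultimately show ?thesis using rZ_meas by (simp add: measure_distr)
      qed
      also have "\<dots> = measure (sample_law P N) {v \<in> space (sample_law P N). e < \<bar>?W v - cs\<bar>}"
        using distr_rZ[OF N] space_sample by simp
      finally show ?case .
    qed
    show "(\<lambda>N. measure M {x \<in> space M. e < \<bar>cond_cov M F (boot_R G Z c N1 N) (boot_L (\<lambda>z. h \<bullet> \<eta> z) Z c N) x - cs\<bar>}) \<longlonglongrightarrow> 0"
      using tendsto_cong[OF ev] lim by simp
  qed
qed

end

theorem propositionA1:
  fixes \<Theta> :: "'k::euclidean_space set"
    and f :: "'k \<Rightarrow> 'd::euclidean_space \<Rightarrow> real"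
    and \<theta>1 :: 'k
    and gradf :: "'d \<Rightarrow> 'k"
    and h :: 'k
    and G :: "'d set \<Rightarrow> ('d \<times> 'd) set"
    and M :: "'w measure"
    and Z :: "nat \<Rightarrow> 'w \<Rightarrow> 'd"
    and c :: "nat \<Rightarrow> nat \<Rightarrow> 'w \<Rightarrow> bool"
    and N1 :: "nat \<Rightarrow> nat"
    and p :: real
  defines "P \<equiv> density lborel (\<lambda>z. ennreal (f \<theta>1 z))"
    and "\<eta> \<equiv> score f \<theta>1 gradf"
    and "F \<equiv> vimage_algebra (space M) (\<lambda>\<omega> i. Z i \<omega>) (PiM UNIV (\<lambda>_. borel :: 'd measure))"
    and "q \<equiv> 1 - p"
    and "r \<equiv> 2 * p * (1 - p)"
  assumes \<theta>1_in: "\<theta>1 \<in> \<Theta>"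
    and densities: "\<And>\<theta>. \<theta> \<in> \<Theta> \<Longrightarrow> f \<theta> \<in> borel_measurable lborel \<and> (\<forall>z. 0 \<le> f \<theta> z)
                          \<and> (\<integral>\<^sup>+ z. ennreal (f \<theta> z) \<partial>lborel) = 1"
    and grad: "AE z in lborel. ((\<lambda>\<theta>. f \<theta> z) has_derivative (\<lambda>u. u \<bullet> gradf z)) (at \<theta>1 within \<Theta>)"
    and grad_meas: "gradf \<in> borel_measurable lborel"
    and R_qmd: "qmd \<Theta> f \<theta>1 \<eta>"
    and R_moment: "(\<integral>\<^sup>+ z. ennreal (\<bar>h \<bullet> \<eta> z\<bar> ^ 4) \<partial>P) < \<infinity>"
    and G_graph: "dir_graph_functional G"
    and G_meas: "graph_measurable G"
    and C: "cond_C G P (\<lambda>z. h \<bullet> \<eta> z) (\<lambda>z. h \<bullet> gradf z)"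
    and M_prob: "prob_space M"
    and Z_distr: "\<And>i. distributed M lborel (Z i) (\<lambda>z. ennreal (f \<theta>1 z))"
    and Z_indep: "prob_space.indep_vars M (\<lambda>_. borel) Z UNIV"
    and c_indep: "\<And>N. prob_space.indep_vars M (\<lambda>_. count_space UNIV) (c N) {..<N}"
    and c_prob: "\<And>N i. i < N \<Longrightarrow> measure M {\<omega> \<in> space M. c N i \<omega>} = real (N1 N) / real N"
    and c_Z_indep: "\<And>N. prob_space.indep_set M (sets F)
                       {(\<lambda>\<omega>. restrict (\<lambda>i. c N i \<omega>) {..<N}) -` A \<inter> space M | A.
                          A \<in> sets (PiM {..<N} (\<lambda>_. count_space UNIV))}"
    and N1_le: "\<And>N. N1 N \<le> N"
    and N1_lim: "(\<lambda>N. real (N1 N) / real N) \<longlonglongrightarrow> p"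
    and p_pos: "0 < p" and p_lt1: "p < 1"
  shows "conv_in_prob (\<lambda>_. M)
           (\<lambda>N. cond_cov M F (boot_R G Z c N1 N) (boot_L (\<lambda>z. h \<bullet> \<eta> z) Z c N))
           ((r / 2) * (p * (\<integral> z. (h \<bullet> gradf z) * lam_dn_lim G P z \<partial>lborel)
                     - q * (\<integral> z. (h \<bullet> gradf z) * lam_up_lim G P z \<partial>lborel)))"
  proof -
  interpret bt f \<theta>1 gradf h G M Z c N1 p P \<eta> F
  proof (rule bt.intro)
    show "P = density lborel (\<lambda>z. ennreal (f \<theta>1 z))" by (simp add: P_def)
    show "\<eta> = score f \<theta>1 gradf" by (simp add: \<eta>_def)
    show "F = vimage_algebra (space M) (\<lambda>\<omega> i. Z i \<omega>) (PiM UNIV (\<lambda>_. borel :: 'd measure))" by (simp add: F_def)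
    show "f \<theta>1 \<in> borel_measurable lborel" using densities[OF \<theta>1_in] by blast
    show "\<And>z. 0 \<le> f \<theta>1 z" using densities[OF \<theta>1_in] by blast
    show "(\<integral>\<^sup>+ z. ennreal (f \<theta>1 z) \<partial>lborel) = 1" using densities[OF \<theta>1_in] by blast
  qed (fact grad_meas R_moment G_graph G_meas C M_prob Z_distr Z_indep c_indep c_prob
       c_Z_indep N1_le N1_lim)+
  show ?thesis using main unfolding q_def r_def .
qed

end
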